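(* Let $W$ be a weak $V$-module and $z$ a nonzero complex number. For $v\in V$ and $\alpha\in\mathcal D_{P(z)}(W)$, $$x_0^{-1}\delta\!\left(\frac{x-z}{x_0}\right)Y^*(v,x)\alpha-x_0^{-1}\delta\!\left(\frac{z-x}{-x_0}\right)Y^R_{P(z)}(v,x)\alpha=z^{-1}\delta\!\left(\frac{x-x_0}{z}\right)Y^L_{P(z)}(v,x_0)\alpha.$$
   Context: $V$ is a vertex operator algebra with vacuum $\mathbf 1$, Virasoro element $\omega$, $Y(\omega,x)=\sum_{n}L(n)x^{-n-2}$, and $V=\coprod_{n\in\mathbb Z}V_{(n)}$ graded by $L(0)$-eigenvalues. The formal delta function is $\delta(x)=\sum_{n\in\mathbb Z}x^n$; binomial expressions $(x_1-x_2)^n$ are expanded in nonnegative powers of the second variable. A weak $V$-module is a vector space $W$ with a linear map $Y_W:V\to(\mathrm{End}\,W)[[x,x^{-1}]]$ such that $Y_W(v,x)w\in W((x))$, $Y_W(\mathbf 1,x)=\mathrm{id}_W$, and the Jacobi identity $x_0^{-1}\delta(\frac{x_1-x_2}{x_0})Y_W(u,x_1)Y_W(v,x_2)-x_0^{-1}\delta(\frac{x_2-x_1}{-x_0})Y_W(v,x_2)Y_W(u,x_1)=x_2^{-1}\delta(\frac{x_1-x_0}{x_2})Y_W(Y(u,x_0)v,x_2)$ holds. For $v\in V$ set $Y^o(v,x)=Y_W(e^{xL(1)}(-x^{-2})^{L(0)}v,x^{-1})$; then $Y^o(v,x)w\in W((x^{-1}))$. For $\alpha\in W^*$ define $Y^*(v,x)\alpha=\sum_{n\in\mathbb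 Z}v^*_n\alpha\,x^{-n-1}\in W^*[[x,x^{-1}]]$ by $\langle Y^*(v,x)\alpha,w\rangle=\langle\alpha,Y^o(v,x)w\rangle$ for $w\in W$. For a nonzero complex number $z$, $\alpha\in W^*$ is a $P(z)$-linear functional if for all $v\in V,w\in W$ the series $\langle\alpha,Y^o(v,x)w\rangle$ converges absolutely in $|x|>|z|$ to a rational function in $\mathbb C[x,x^{-1},(x-z)^{-1}]$, and for each fixed $v$ the orders of the poles at $0$ and at $z$ of these rational functions are bounded independently of $w$. $\mathcal D_{P(z)}(W)$ is the space of $P(z)$-linear functionals on $W$. Let $\iota_{x;\infty}$ and $\iota_{x;0}$ be the injective maps from the field $\mathbb C(x)$ of rational functions to Laurent series sending a rational function to its Laurent expansion at $x=\infty$ and at $x=0$, respectively. For $v\in V$, $\alpha\in\mathcal D_{P(z)}(W)$, $w\in W$, let $f_{v,\alpha,w}=\iota_{x;\infty}^{-1}\langle\alpha,Y^o(v,x)w\rangle$; define $Y^R_{P(z)}(v,x)\alpha,\ Y^L_{P(z)}(v,x)\alpha\in W^*[[x,x^{-1}]]$ by $\langle Y^R_{P(z)}(v,x)\alpha,w\rangle=\iota_{x;0}f_{v,\alpha,w}(x)$ and $\langle Y^L_{P(z)}(v,x)\alpha,w\rangle=\iota_{x;0}\big(f_{v,\alpha,w}(x+z)\big)$. *)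

theory Defs
  imports "HOL-Complex_Analysis.Complex_Analysis"
begin

text \<open>A formal series in several variables is represented by its coefficient function
  (exponent tuple to coefficient).  Products of formal series are defined coefficientwise
  by the (in all our uses finitely supported) sum over the nonzero terms.\<close>

definition fsum :: "('i \<Rightarrow> 'a::comm_monoid_add) \<Rightarrow> 'a" where
  "fsum f = sum f {i. f i \<noteq> 0}"

text \<open>Coefficient of y1^a y2^b in the binomial expression (y1 - y2)^n, expanded in
  nonnegative powers of the second variable y2.\<close>
definition binom_exp :: "int \<Rightarrow> int \<Rightarrow> int \<Rightarrow> complex" where
  "binom_exp n a b = (if 0 \<le> b \<and> a + b = n
       then (-1) ^ nat b * (of_int n gchoose nat b) else 0)"

text \<open>Coefficient of x0^p y1^a y2^b in x0^{-1} delta((y1 - y2)/x0) = sum_n (y1-y2)^n x0^{-n-1}.\<close>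
definition delta_coeff :: "int \<Rightarrow> int \<Rightarrow> int \<Rightarrow> complex" where
  "delta_coeff p a b = binom_exp (-p-1) a b"

text \<open>Coefficient of x0^p y1^a y2^b in x0^{-1} delta((y2 - y1)/(-x0))
  = sum_n (y2-y1)^n (-1)^n x0^{-n-1}, with (y2-y1)^n expanded in nonnegative powers of y1.\<close>
definition delta_coeff_neg :: "int \<Rightarrow> int \<Rightarrow> int \<Rightarrow> complex" where
  "delta_coeff_neg p a b = (-1) powi (-p-1) * binom_exp (-p-1) b a"

text \<open>Coefficient (at exponents (p,q,r)) of the product of a complex 3-variable series D
  with a 3-variable series S with coefficients in a vector space (scalar multiplication sm).\<close>
definition fprod3 :: "(complex \<Rightarrow> 'w \<Rightarrow> 'w::ab_group_add) \<Rightarrow> (int \<Rightarrow> int \<Rightarrow> int \<Rightarrow> complex)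
     \<Rightarrow> (int \<Rightarrow> int \<Rightarrow> int \<Rightarrow> 'w) \<Rightarrow> int \<Rightarrow> int \<Rightarrow> int \<Rightarrow> 'w" where
  "fprod3 sm D S p q r = fsum (\<lambda>(i,j,k). sm (D i j k) (S (p-i) (q-j) (r-k)))"

text \<open>Coefficient (at exponents (p,a)) of the product of a complex 2-variable series E with a
  2-variable series S with coefficients in the algebraic dual W^* (functionals 'w => complex);
  the result is the functional w |-> sum over nonzero terms (weak definition of the product).\<close>
definition fprod2 :: "(int \<Rightarrow> int \<Rightarrow> complex) \<Rightarrow> (int \<Rightarrow> int \<Rightarrow> 'w \<Rightarrow> complex)
     \<Rightarrow> int \<Rightarrow> int \<Rightarrow> 'w \<Rightarrow> complex" where
  "fprod2 E S p a = (\<lambda>w. fsum (\<lambda>(i,j). E i j * S (p-i) (a-j) w))"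

text \<open>Vertex operators are given by their modes:  Y u n = u_n, where
  Y(u,x) = sum_n u_n x^{-n-1}; so the coefficient of x^k is Y u (-k-1).\<close>

text \<open>The Jacobi identity for Y_M (on M) w.r.t. Y (on V), compared coefficientwise at
  x0^p x1^q x2^r and applied to each vector w.\<close>
definition jacobi_identity :: "('v \<Rightarrow> int \<Rightarrow> 'v \<Rightarrow> 'v) \<Rightarrow> (complex \<Rightarrow> 'w \<Rightarrow> 'w::ab_group_add)
     \<Rightarrow> ('v \<Rightarrow> int \<Rightarrow> 'w \<Rightarrow> 'w) \<Rightarrow> bool" where
  "jacobi_identity Y sm YM \<longleftrightarrow> (\<forall>u v w p q r.
     fprod3 sm (\<lambda>i j k. delta_coeff i j k)
        (\<lambda>i j k. if i = 0 then YM u (-j-1) (YM v (-k-1) w) else 0) p q r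
   - fprod3 sm (\<lambda>i j k. delta_coeff_neg i j k)
        (\<lambda>i j k. if i = 0 then YM v (-k-1) (YM u (-j-1) w) else 0) p q r
   = fprod3 sm (\<lambda>i j k. delta_coeff k j i)
        (\<lambda>i j k. if j = 0 then YM (Y u (-i-1) v) (-k-1) w else 0) p q r)"

definition Lop :: "('v \<Rightarrow> int \<Rightarrow> 'v \<Rightarrow> 'v) \<Rightarrow> 'v \<Rightarrow> int \<Rightarrow> 'v \<Rightarrow> 'v" where
  "Lop Y om n = Y om (n + 1)"

definition Vgr :: "(complex \<Rightarrow> 'v \<Rightarrow> 'v) \<Rightarrow> ('v \<Rightarrow> int \<Rightarrow> 'v \<Rightarrow> 'v) \<Rightarrow> 'v \<Rightarrow> int \<Rightarrow> 'v set" where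
  "Vgr sm Y om n = {v. Lop Y om 0 v = sm (of_int n) v}"

definition is_VOA :: "(complex \<Rightarrow> 'v \<Rightarrow> 'v::ab_group_add) \<Rightarrow> ('v \<Rightarrow> int \<Rightarrow> 'v \<Rightarrow> 'v)
     \<Rightarrow> 'v \<Rightarrow> 'v \<Rightarrow> bool" where
  "is_VOA sm Y vac om \<longleftrightarrow>
     vector_space sm
   \<and> (\<forall>u n. Vector_Spaces.linear sm sm (Y u n))
   \<and> (\<forall>n v. Vector_Spaces.linear sm sm (\<lambda>u. Y u n v))
   \<and> (\<forall>u v. \<exists>N. \<forall>n\<ge>N. Y u n v = 0)
   \<and> (\<forall>n. Y vac n = (if n = -1 then id else (\<lambda>_. 0)))
   \<and> (\<forall>v. (\<forall>n\<ge>0. Y v n vac = 0) \<and> Y v (-1) vac = v)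
   \<and> jacobi_identity Y sm Y
   \<and> (\<exists>c::complex. \<forall>m n v.
        Lop Y om m (Lop Y om n v) - Lop Y om n (Lop Y om m v)
        = sm (of_int (m - n)) (Lop Y om (m + n) v)
          + (if m + n = 0 then sm ((of_int m ^ 3 - of_int m) / 12 * c) v else 0))
   \<and> (\<forall>v n. Y (Lop Y om (-1) v) n = (\<lambda>w. sm (- of_int n) (Y v (n - 1) w)))
   \<and> (\<forall>v. \<exists>f. finite {n. f n \<noteq> 0} \<and> (\<forall>n. f n \<in> Vgr sm Y om n) \<and> v = sum f {n. f n \<noteq> 0})
   \<and> (\<forall>n. \<exists>B. finite B \<and> module.span sm B = Vgr sm Y om n)
   \<and> (\<exists>N. \<forall>n<N. Vgr sm Y om n = {0})"

definition is_weak_module :: "('v \<Rightarrow> int \<Rightarrow> 'v \<Rightarrow> 'v) \<Rightarrow> 'v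
     \<Rightarrow> (complex \<Rightarrow> 'w \<Rightarrow> 'w::ab_group_add) \<Rightarrow> ('v \<Rightarrow> int \<Rightarrow> 'w \<Rightarrow> 'w) \<Rightarrow> (complex \<Rightarrow> 'v \<Rightarrow> 'v::ab_group_add) \<Rightarrow> bool" where
  "is_weak_module Y vac smW YW smV \<longleftrightarrow>
     vector_space smW
   \<and> (\<forall>u n. Vector_Spaces.linear smW smW (YW u n))
   \<and> (\<forall>n w. Vector_Spaces.linear smV smW (\<lambda>u. YW u n w))
   \<and> (\<forall>u w. \<exists>N. \<forall>n\<ge>N. YW u n w = 0)
   \<and> (\<forall>n. YW vac n = (if n = -1 then id else (\<lambda>_. 0)))
   \<and> jacobi_identity Y smW YW"

definition hcomp :: "(complex \<Rightarrow> 'v \<Rightarrow> 'v::ab_group_add) \<Rightarrow> ('v \<Rightarrow> int \<Rightarrow> 'v \<Rightarrow> 'v) \<Rightarrow> 'v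
     \<Rightarrow> 'v \<Rightarrow> int \<Rightarrow> 'v" where
  "hcomp sm Y om v = (THE f. finite {n. f n \<noteq> 0} \<and> (\<forall>n. f n \<in> Vgr sm Y om n)
                           \<and> v = sum f {n. f n \<noteq> 0})"

text \<open>Coefficient of x^m in Y^o(v,x) w = Y_W(e^{x L(1)} (-x^{-2})^{L(0)} v, x^{-1}) w.
  For u in V_(k):  e^{xL(1)}(-x^{-2})^{L(0)} u = sum_j ((-1)^k / j!) x^{j-2k} L(1)^j u, and
  Y_W(u', x^{-1}) = sum_n u'_n x^{n+1}.\<close>
definition Yopp :: "(complex \<Rightarrow> 'v \<Rightarrow> 'v::ab_group_add) \<Rightarrow> ('v \<Rightarrow> int \<Rightarrow> 'v \<Rightarrow> 'v) \<Rightarrow> 'v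
     \<Rightarrow> (complex \<Rightarrow> 'w \<Rightarrow> 'w::ab_group_add) \<Rightarrow> ('v \<Rightarrow> int \<Rightarrow> 'w \<Rightarrow> 'w) \<Rightarrow> 'v \<Rightarrow> int \<Rightarrow> 'w \<Rightarrow> 'w" where
  "Yopp smV Y om smW YW v m w =
     fsum (\<lambda>k::int. fsum (\<lambda>j::nat.
        smW ((-1) powi k / fact j)
            (YW ((Lop Y om 1 ^^ j) (hcomp smV Y om v k)) (m - 1 - int j + 2 * k) w)))"

definition Ystar :: "(complex \<Rightarrow> 'v \<Rightarrow> 'v::ab_group_add) \<Rightarrow> ('v \<Rightarrow> int \<Rightarrow> 'v \<Rightarrow> 'v) \<Rightarrow> 'v
     \<Rightarrow> (complex \<Rightarrow> 'w \<Rightarrow> 'w::ab_group_add) \<Rightarrow> ('v \<Rightarrow> int \<Rightarrow> 'w \<Rightarrow> 'w) \<Rightarrow> 'v \<Rightarrow> ('w \<Rightarrow> complex)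
     \<Rightarrow> int \<Rightarrow> 'w \<Rightarrow> complex" where
  "Ystar smV Y om smW YW v \<alpha> m = (\<lambda>w. \<alpha> (Yopp smV Y om smW YW v m w))"

text \<open>P(z)-linear functionals:  alpha in W^* such that for every v there is a bound N with:
  for all w, the series <alpha, Y^o(v,x)w> converges absolutely for |x| > |z| to a rational
  function of the form p(x) / (x^N (x-z)^N), p a polynomial; i.e. to an element of
  C[x,x^{-1},(x-z)^{-1}] whose poles at 0 and z have order at most N.\<close>
definition D_Pz :: "(complex \<Rightarrow> 'v \<Rightarrow> 'v::ab_group_add) \<Rightarrow> ('v \<Rightarrow> int \<Rightarrow> 'v \<Rightarrow> 'v) \<Rightarrow> 'v
     \<Rightarrow> (complex \<Rightarrow> 'w \<Rightarrow> 'w::ab_group_add) \<Rightarrow> ('v \<Rightarrow> int \<Rightarrow> 'w \<Rightarrow> 'w) \<Rightarrow> complex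
     \<Rightarrow> ('w \<Rightarrow> complex) set" where
  "D_Pz smV Y om smW YW z = {\<alpha>. Vector_Spaces.linear smW (*) \<alpha> \<and>
     (\<forall>v. \<exists>N::nat. \<forall>w. \<exists>p::complex poly. \<forall>x. cmod x > cmod z \<longrightarrow>
        (\<lambda>m. cmod (\<alpha> (Yopp smV Y om smW YW v m w) * x powi m)) summable_on UNIV
      \<and> ((\<lambda>m. \<alpha> (Yopp smV Y om smW YW v m w) * x powi m)
            has_sum (poly p x / (x ^ N * (x - z) ^ N))) UNIV)}"

definition rational_fn :: "(complex \<Rightarrow> complex) \<Rightarrow> bool" where
  "rational_fn f \<longleftrightarrow> (\<exists>p q :: complex poly. q \<noteq> 0 \<and>
      (\<forall>x. poly q x \<noteq> 0 \<longrightarrow> f x = poly p x / poly q x))"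

definition iota0 :: "(complex \<Rightarrow> complex) \<Rightarrow> int \<Rightarrow> complex" where
  "iota0 f m = fls_nth (laurent_expansion f 0) m"

definition iota_inf :: "(complex \<Rightarrow> complex) \<Rightarrow> int \<Rightarrow> complex" where
  "iota_inf f m = fls_nth (laurent_expansion (\<lambda>y. f (inverse y)) 0) (-m)"

text \<open>f_{v,alpha,w} = iota_{x;infinity}^{-1} <alpha, Y^o(v,x) w> (a rational function,
  determined up to its values at finitely many points, which do not affect expansions).\<close>
definition f_val :: "(complex \<Rightarrow> 'v \<Rightarrow> 'v::ab_group_add) \<Rightarrow> ('v \<Rightarrow> int \<Rightarrow> 'v \<Rightarrow> 'v) \<Rightarrow> 'v
     \<Rightarrow> (complex \<Rightarrow> 'w \<Rightarrow> 'w::ab_group_add) \<Rightarrow> ('v \<Rightarrow> int \<Rightarrow> 'w \<Rightarrow> 'w) \<Rightarrow> 'v \<Rightarrow> ('w \<Rightarrow> complex)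
     \<Rightarrow> 'w \<Rightarrow> complex \<Rightarrow> complex" where
  "f_val smV Y om smW YW v \<alpha> w = (SOME f. rational_fn f \<and>
      iota_inf f = (\<lambda>m. \<alpha> (Yopp smV Y om smW YW v m w)))"

definition YR :: "(complex \<Rightarrow> 'v \<Rightarrow> 'v::ab_group_add) \<Rightarrow> ('v \<Rightarrow> int \<Rightarrow> 'v \<Rightarrow> 'v) \<Rightarrow> 'v
     \<Rightarrow> (complex \<Rightarrow> 'w \<Rightarrow> 'w::ab_group_add) \<Rightarrow> ('v \<Rightarrow> int \<Rightarrow> 'w \<Rightarrow> 'w) \<Rightarrow> 'v \<Rightarrow> ('w \<Rightarrow> complex)
     \<Rightarrow> int \<Rightarrow> 'w \<Rightarrow> complex" where
  "YR smV Y om smW YW v \<alpha> m = (\<lambda>w. iota0 (f_val smV Y om smW YW v \<alpha> w) m)"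

definition YL :: "(complex \<Rightarrow> 'v \<Rightarrow> 'v::ab_group_add) \<Rightarrow> ('v \<Rightarrow> int \<Rightarrow> 'v \<Rightarrow> 'v) \<Rightarrow> 'v
     \<Rightarrow> (complex \<Rightarrow> 'w \<Rightarrow> 'w::ab_group_add) \<Rightarrow> ('v \<Rightarrow> int \<Rightarrow> 'w \<Rightarrow> 'w) \<Rightarrow> complex \<Rightarrow> 'v
     \<Rightarrow> ('w \<Rightarrow> complex) \<Rightarrow> int \<Rightarrow> 'w \<Rightarrow> complex" where
  "YL smV Y om smW YW z v \<alpha> m = (\<lambda>w. iota0 (\<lambda>x. f_val smV Y om smW YW v \<alpha> w (x + z)) m)"

end

theory Submission
  imports Defs
begin

lemma fsum_eq_sum:
  assumes "finite S" "{i. f i \<noteq> 0} \<subseteq> S"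
  shows "fsum f = sum f S"
  unfolding fsum_def using assms by (intro sum.mono_neutral_left) auto

lemma fsum_single: "fsum (\<lambda>b. if b = b0 then v else 0) = v"
  by (subst fsum_eq_sum[of "{b0}"]) auto

lemma fsum_inj:
  assumes "inj h" "{x. G x \<noteq> 0} = h ` {y. g y \<noteq> 0}" "\<And>y. G (h y) = g y"
  shows "fsum G = fsum g"
proof (cases "finite {y. g y \<noteq> 0}")
  case True
  have "fsum G = sum G (h ` {y. g y \<noteq> 0})" unfolding fsum_def using assms(2) by simp
  also have "\<dots> = sum (G \<circ> h) {y. g y \<noteq> 0}"
    by (rule sum.reindex) (use assms(1) in \<open>auto intro: inj_on_subset\<close>)
  also have "\<dots> = fsum g" unfolding fsum_def using assms(3) by simp
  finally show ?thesis .
next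
  case False
  then have "infinite {x. G x \<noteq> 0}" using assms(1,2)
    by (metis finite_imageD inj_on_subset subset_UNIV)
  then show ?thesis using False unfolding fsum_def by simp
qed

lemma fsum_bij:
  assumes "bij h"
  shows "fsum (\<lambda>x. g (h x)) = fsum g"
proof -
  have "fsum g = fsum (\<lambda>x. g (h x))"
  proof (rule fsum_inj[where h=h and G=g and g="\<lambda>x. g (h x)"])
    show "inj h" using assms by (simp add: bij_is_inj)
    show "{x. g x \<noteq> 0} = h ` {y. g (h y) \<noteq> 0}"
    proof
      show "{x. g x \<noteq> 0} \<subseteq> h ` {y. g (h y) \<noteq> 0}"
        using assms by (auto simp: image_iff bij_def surj_def)
    qed auto
  qed simp
  then show ?thesis by simp
qed

lemma fsum_pair1: "fsum (\<lambda>(i,j). if i = p then g j else 0) = fsum g"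
  by (rule fsum_inj[of "Pair p"]) (auto simp: inj_def image_iff split: if_splits)

lemma fsum_pair2: "fsum (\<lambda>(i,j). if j = p then g i else 0) = fsum g"
  by (rule fsum_inj[of "\<lambda>i. (i, p)"]) (auto simp: inj_def image_iff split: if_splits)

lemma fls_times_fsum:
  "fls_nth (G * F :: complex fls) n = fsum (\<lambda>k. fls_nth G k * fls_nth F (n - k))"
proof -
  have "fls_nth (G * F) n = (\<Sum>i=fls_subdegree G..n - fls_subdegree F. fls_nth G i * fls_nth F (n - i))"
    by (rule fls_times_nth(2))
  also have "\<dots> = fsum (\<lambda>k. fls_nth G k * fls_nth F (n - k))"
  proof (rule fsum_eq_sum[symmetric])
    show "{i. fls_nth G i * fls_nth F (n - i) \<noteq> 0} \<subseteq> {fls_subdegree G..n - fls_subdegree F}"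
    proof
      fix i assume "i \<in> {i. fls_nth G i * fls_nth F (n - i) \<noteq> 0}"
      then have "fls_nth G i \<noteq> 0 \<and> fls_nth F (n - i) \<noteq> 0" by simp
      then have "\<not> i < fls_subdegree G" "\<not> n - i < fls_subdegree F"
        using fls_eq0_below_subdegree by blast+
      then show "i \<in> {fls_subdegree G..n - fls_subdegree F}" by auto
    qed
  qed simp
  finally show ?thesis .
qed

definition bfps :: "complex \<Rightarrow> int \<Rightarrow> complex fps" where
  "bfps w n = Abs_fps (\<lambda>b. (of_int n gchoose b) * w ^ b)"

lemma bfps_0: "bfps w 0 = 1"
  unfolding bfps_def by (rule fps_ext) (auto simp: gbinomial_0_left)

lemma bfps_step: "bfps w n * (1 + fps_const w * fps_X) = bfps w (n+1)"
proof (rule fps_ext)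
  fix b
  have e: "bfps w n * (1 + fps_const w * fps_X) = bfps w n + fps_const w * (bfps w n * fps_X)"
    by (simp add: distrib_left mult.assoc mult.left_commute)
  show "fps_nth (bfps w n * (1 + fps_const w * fps_X)) b = fps_nth (bfps w (n+1)) b"
  proof (cases b)
    case 0 then show ?thesis unfolding e by (simp add: bfps_def)
  next
    case (Suc k)
    have "fps_nth (bfps w n * (1 + fps_const w * fps_X)) b = fps_nth (bfps w n) b + w * fps_nth (bfps w n) k"
      unfolding e using Suc by simp
    also have "\<dots> = ((of_int n gchoose Suc k) + (of_int n gchoose k)) * w ^ Suc k"
      using Suc by (simp add: bfps_def distrib_right)
    also have "\<dots> = fps_nth (bfps w (n+1)) b"
      using Suc gbinomial_Suc_Suc[of "of_int n :: complex" k] by (simp add: bfps_def add.commute)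
    finally show ?thesis .
  qed
qed

lemma bfps_pow: "(1 + fls_const w * fls_X) powi n = fps_to_fls (bfps w n)"
proof -
  have base: "fps_to_fls (1 + fps_const w * fps_X) = 1 + fls_const w * fls_X"
    by (simp add: fls_times_fps_to_fls)
  have nz: "(1 + fls_const w * fls_X :: complex fls) \<noteq> 0"
  proof
    assume "(1 + fls_const w * fls_X :: complex fls) = 0"
    then have "fls_nth (1 + fls_const w * fls_X :: complex fls) 0 = 0" by simp
    then show False by (simp add: fls_X_times_conv_shift)
  qed
  have step: "fps_to_fls (bfps w (m+1)) = fps_to_fls (bfps w m) * (1 + fls_const w * fls_X)" for m
    using bfps_step[of w m] base by (metis fls_times_fps_to_fls)
  show ?thesis
  proof (induction n rule: int_induct[where k=0])
    case base then show ?case by (simp add: bfps_0)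
  next
    case (step1 i)
    then show ?case using step[of i] nz by (simp add: power_int_add_1)
  next
    case (step2 i)
    have "fps_to_fls (bfps w i) = fps_to_fls (bfps w (i - 1)) * (1 + fls_const w * fls_X)"
      using step[of "i - 1"] by simp
    then have "fps_to_fls (bfps w (i - 1)) = fps_to_fls (bfps w i) / (1 + fls_const w * fls_X)"
      using nz by (simp add: field_simps)
    then show ?case using step2 nz by (simp add: power_int_diff)
  qed
qed

lemma fls_X_inv_powi: "fls_X_inv powi n = (fls_shift n 1 :: complex fls)"
  by (simp add: fls_inverse_X[symmetric] power_int_inverse fls_inverse_X_intpow)

lemma one_plus_nz: "(1 + fls_const w * fls_X :: complex fls) \<noteq> 0"
proof
  assume "(1 + fls_const w * fls_X :: complex fls) = 0"
  then have "fls_nth (1 + fls_const w * fls_X :: complex fls) 0 = 0" by simp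
  then show False by (simp add: fls_X_times_conv_shift)
qed

lemma affine_powi_nth:
  fixes c w :: complex
  shows "fls_nth ((fls_const c * (1 + fls_const w * fls_X)) powi n) k =
     c powi n * (if k < 0 then 0 else (of_int n gchoose nat k) * w ^ nat k)"
proof -
  have "(fls_const c * (1 + fls_const w * fls_X)) powi n = fls_const (c powi n) * fps_to_fls (bfps w n)"
    by (simp add: power_int_mult_distrib bfps_pow fls_const_power_int)
  then show ?thesis by (simp add: fls_mult_const_nth bfps_def)
qed

definition Hf :: "complex \<Rightarrow> int \<Rightarrow> complex fls" where
  "Hf z p = (fls_X_inv - fls_const z) powi (-(p+1))"
definition Kf :: "complex \<Rightarrow> int \<Rightarrow> complex fls" where
  "Kf z p = (fls_X - fls_const z) powi (-(p+1))"
definition Mf :: "complex \<Rightarrow> int \<Rightarrow> complex fls" where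
  "Mf z a = (fls_X + fls_const z) powi (-(a+1))"

lemma Hf_nth:
  "fls_nth (Hf z p) k = (if k - p - 1 < 0 then 0 else
      (of_int (-(p+1)) gchoose nat (k - p - 1)) * (-z) ^ nat (k - p - 1))"
proof -
  have xx: "fls_X_inv * (fls_X::complex fls) = 1" by (simp add: fls_X_inv_times_conv_shift)
  have "fls_X_inv * (1 + fls_const (-z) * (fls_X :: complex fls)) = fls_X_inv + fls_const (-z) * (fls_X_inv * fls_X)"
    by (simp only: distrib_left mult_1_right mult.left_commute)
  also have "\<dots> = fls_X_inv - fls_const z" by (simp add: xx fls_const_uminus)
  finally have e: "fls_X_inv - fls_const z = fls_X_inv * (1 + fls_const (-z) * (fls_X :: complex fls))" by simp
  have "Hf z p = fls_shift (-(p+1)) 1 * fps_to_fls (bfps (-z) (-(p+1)))"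
    unfolding Hf_def e power_int_mult_distrib fls_X_inv_powi
    using bfps_pow[of "-z" "-(p+1)"] by simp
  also have "\<dots> = fls_shift (-(p+1)) (fps_to_fls (bfps (-z) (-(p+1))))"
    by (simp add: fls_shifted_times_simps)
  finally show ?thesis by (simp add: bfps_def algebra_simps)
qed

lemma Kf_nth:
  assumes "z \<noteq> 0"
  shows "fls_nth (Kf z p) k = (-z) powi (-(p+1)) * (if k < 0 then 0 else
      (of_int (-(p+1)) gchoose nat k) * (- 1 / z) ^ nat k)"
proof -
  have "fls_const (-z) * (1 + fls_const (- 1 / z) * (fls_X :: complex fls)) =
        fls_const (-z) + (fls_const (-z) * fls_const (- 1 / z)) * fls_X"
    by (simp only: distrib_left mult_1_right mult.assoc)
  also have "fls_const (-z) * fls_const (- 1 / z) = fls_const ((-z) * (- 1 / z))" by (rule fls_const_mult_const)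
  also have "(-z) * (- 1 / z) = 1" using assms by simp
  finally have e: "fls_X - fls_const z = fls_const (-z) * (1 + fls_const (- 1 / z) * (fls_X :: complex fls))"
    by (simp add: fls_const_uminus)
  show ?thesis unfolding Kf_def e affine_powi_nth ..
qed

lemma Mf_nth:
  assumes "z \<noteq> 0"
  shows "fls_nth (Mf z a) k = z powi (-(a+1)) * (if k < 0 then 0 else
      (of_int (-(a+1)) gchoose nat k) * (1 / z) ^ nat k)"
proof -
  have "fls_const z * (1 + fls_const (1 / z) * (fls_X :: complex fls)) =
        fls_const z + (fls_const z * fls_const (1 / z)) * fls_X"
    by (simp only: distrib_left mult_1_right mult.assoc)
  also have "fls_const z * fls_const (1 / z) = fls_const (z * (1 / z))" by (rule fls_const_mult_const)
  also have "z * (1 / z) = 1" using assms by simp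
  finally have e: "fls_X + fls_const z = fls_const z * (1 + fls_const (1 / z) * (fls_X :: complex fls))"
    by (simp add: add.commute)
  show ?thesis unfolding Mf_def e affine_powi_nth ..
qed

definition E1 :: "complex \<Rightarrow> int \<Rightarrow> int \<Rightarrow> complex" where
  "E1 z i j = fsum (\<lambda>b. delta_coeff i j b * z powi b)"
definition E2 :: "complex \<Rightarrow> int \<Rightarrow> int \<Rightarrow> complex" where
  "E2 z i j = fsum (\<lambda>b. delta_coeff_neg i j b * z powi b)"
definition E3 :: "complex \<Rightarrow> int \<Rightarrow> int \<Rightarrow> complex" where
  "E3 z i j = fsum (\<lambda>s. delta_coeff s j i * z powi s)"

lemma E1_closed: "E1 z p j = (if 0 \<le> -p-1-j then (-1) ^ nat (-p-1-j) *
     (of_int (-p-1) gchoose nat (-p-1-j)) * z powi (-p-1-j) else 0)"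
proof -
  have "(\<lambda>b. delta_coeff p j b * z powi b) = (\<lambda>b. if b = -p-1-j then
     (if 0 \<le> -p-1-j then (-1) ^ nat (-p-1-j) * (of_int (-p-1) gchoose nat (-p-1-j)) * z powi (-p-1-j) else 0) else 0)"
    by (rule ext) (auto simp: delta_coeff_def binom_exp_def)
  then show ?thesis unfolding E1_def by (simp only: fsum_single)
qed

lemma E2_closed: "E2 z p j = (if 0 \<le> j then (-1) powi (-p-1) * ((-1) ^ nat j *
     (of_int (-p-1) gchoose nat j)) * z powi (-p-1-j) else 0)"
proof -
  have "(\<lambda>b. delta_coeff_neg p j b * z powi b) = (\<lambda>b. if b = -p-1-j then
     (if 0 \<le> j then (-1) powi (-p-1) * ((-1) ^ nat j * (of_int (-p-1) gchoose nat j)) * z powi (-p-1-j) else 0) else 0)"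
    by (rule ext) (auto simp: delta_coeff_neg_def binom_exp_def)
  then show ?thesis unfolding E2_def by (simp only: fsum_single)
qed

lemma E3_closed: "E3 z i a = (if 0 \<le> i then (-1) ^ nat i *
     (of_int (a+i) gchoose nat i) * z powi (-a-i-1) else 0)"
proof -
  have "(\<lambda>s. delta_coeff s a i * z powi s) = (\<lambda>s. if s = -a-i-1 then
     (if 0 \<le> i then (-1) ^ nat i * (of_int (a+i) gchoose nat i) * z powi (-a-i-1) else 0) else 0)"
    by (rule ext) (auto simp: delta_coeff_def binom_exp_def)
  then show ?thesis unfolding E3_def by (simp only: fsum_single)
qed

lemma powi_nat: "0 \<le> b \<Longrightarrow> (x::complex) powi b = x ^ nat b"
  by (simp add: power_int_def)

lemma C1: "fls_nth (Hf z p) k = E1 z p (-k)"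
proof (cases "k - p - 1 < 0")
  case True then show ?thesis by (simp add: Hf_nth E1_closed)
next
  case False
  have e: "-p-1-(-k) = k-p-1" "-(p+1) = -p-1" by simp_all
  have "fls_nth (Hf z p) k = (of_int (-p-1) gchoose nat (k - p - 1)) * ((-1) ^ nat (k - p - 1) * z ^ nat (k - p - 1))"
    unfolding Hf_nth e using False by (simp only: if_False power_minus[of z])
  also have "\<dots> = E1 z p (-k)"
  proof -
    have h: "0 \<le> k-p-1" using False by simp
    show ?thesis unfolding E1_closed e if_P[OF h] powi_nat[OF h] by (simp only: mult_ac)
  qed
  finally show ?thesis .
qed

lemma C2: assumes "z \<noteq> 0" shows "fls_nth (Kf z p) k = E2 z p k"
proof (cases "k < 0")
  case True then show ?thesis using assms by (simp add: Kf_nth E2_closed)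
next
  case False
  have e: "-(p+1) = -p-1" by simp
  have a: "(-z) powi (-p-1) = (-1) powi (-p-1) * z powi (-p-1)"
  proof -
    have "-z = (-1) * z" by simp
    then show ?thesis by (metis power_int_mult_distrib)
  qed
  have b: "(- 1 / z) ^ nat k = (-1) ^ nat k * z powi (-k)"
  proof -
    have "(- 1 / z) ^ nat k = (-1) ^ nat k * (1 / z) ^ nat k"
      by (metis minus_divide_left power_minus)
    also have "(1 / z) ^ nat k = z powi (-k)"
      using False by (simp add: power_int_def power_one_over inverse_eq_divide)
    finally show ?thesis .
  qed
  have c: "z powi (-p-1) * z powi (-k) = z powi (-p-1-k)"
  proof -
    have "-p-1-k = (-p-1) + (-k)" by simp
    then show ?thesis using assms by (metis power_int_add)
  qed
  have "fls_nth (Kf z p) k = (-z) powi (-p-1) * ((of_int (-p-1) gchoose nat k) * (- 1 / z) ^ nat k)"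
    unfolding Kf_nth[OF assms] e using False by (simp only: if_False)
  also have "\<dots> = (-1) powi (-p-1) * ((-1) ^ nat k * (of_int (-p-1) gchoose nat k)) * (z powi (-p-1) * z powi (-k))"
    unfolding a b by (simp only: mult_ac)
  also have "\<dots> = E2 z p k"
  proof -
    have h: "0 \<le> k" using False by simp
    show ?thesis unfolding E2_closed c if_P[OF h] by (simp only: mult_ac)
  qed
  finally show ?thesis .
qed

lemma C3: assumes "z \<noteq> 0" shows "fls_nth (Mf z a) k = E3 z k a"
proof (cases "k < 0")
  case True then show ?thesis using assms by (simp add: Mf_nth E3_closed)
next
  case False
  have g: "(of_int (-(a+1)) :: complex) gchoose nat k = (-1) ^ nat k * (of_int (a+k) gchoose nat k)"
  proof -
    have "(of_int (-(a+1)) :: complex) gchoose nat k = (- of_int (a+1)) gchoose nat k" by simp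
    also have "\<dots> = (-1) ^ nat k * (of_int (a+1) + of_nat (nat k) - 1 gchoose nat k)"
      by (rule gbinomial_minus)
    also have "(of_int (a+1) + of_nat (nat k) - 1 :: complex) = of_int (a+k)"
      using False by simp
    finally show ?thesis .
  qed
  have b: "(1 / z) ^ nat k = z powi (-k)"
    using False by (simp add: power_int_def power_one_over inverse_eq_divide)
  have c: "z powi (-(a+1)) * z powi (-k) = z powi (-a-k-1)"
  proof -
    have "-a-k-1 = (-(a+1)) + (-k)" by simp
    then show ?thesis using assms by (metis power_int_add)
  qed
  have "fls_nth (Mf z a) k = z powi (-(a+1)) * ((of_int (-(a+1)) gchoose nat k) * (1 / z) ^ nat k)"
    unfolding Mf_nth[OF assms] using False by (simp only: if_False)
  also have "\<dots> = (-1) ^ nat k * (of_int (a+k) gchoose nat k) * (z powi (-(a+1)) * z powi (-k))"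
    unfolding g b by (simp only: mult_ac)
  also have "\<dots> = E3 z k a"
  proof -
    have h: "0 \<le> k" using False by simp
    show ?thesis unfolding E3_closed c if_P[OF h] by (simp only: mult_ac)
  qed
  finally show ?thesis .
qed

definition Dd :: "complex \<Rightarrow> complex fls \<Rightarrow> complex fls \<Rightarrow> complex fls \<Rightarrow> int \<Rightarrow> int \<Rightarrow> complex" where
  "Dd z F1 F2 F3 p a = fls_nth (Hf z p * F1) (-a) - fls_nth (Kf z p * F2) a - fls_nth (Mf z a * F3) p"

lemma Dd_add: "Dd z (F1+G1) (F2+G2) (F3+G3) p a = Dd z F1 F2 F3 p a + Dd z G1 G2 G3 p a"
  by (simp add: Dd_def distrib_left)

lemma Dd_cmult: "Dd z (fls_const c * F1) (fls_const c * F2) (fls_const c * F3) p a = c * Dd z F1 F2 F3 p a"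
  by (simp add: Dd_def mult.left_commute[of _ "fls_const c"] fls_mult_const_nth right_diff_distrib)

lemma Dd_zero: "Dd z 0 0 0 p a = 0"
  by (simp add: Dd_def)

lemma Xinv_minus_nz: "fls_X_inv - fls_const z \<noteq> (0::complex fls)"
proof
  assume "fls_X_inv - fls_const z = (0::complex fls)"
  then have "fls_nth (fls_X_inv - fls_const z :: complex fls) (-1) = 0" by simp
  then show False by simp
qed

lemma X_minus_nz: "fls_X - fls_const z \<noteq> (0::complex fls)"
proof
  assume "fls_X - fls_const z = (0::complex fls)"
  then have "fls_nth (fls_X - fls_const z :: complex fls) 1 = 0" by simp
  then show False by simp
qed

lemma X_plus_nz: "fls_X + fls_const z \<noteq> (0::complex fls)"
proof
  assume "fls_X + fls_const z = (0::complex fls)"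
  then have "fls_nth (fls_X + fls_const z :: complex fls) 1 = 0" by simp
  then show False by simp
qed

lemma powi_step: "(x::complex fls) \<noteq> 0 \<Longrightarrow> x powi (-(n+1)) * x = x powi (-n)"
proof -
  assume "x \<noteq> 0"
  have "-n = -(n+1) + 1" by simp
  then have "x powi (-n) = x powi (-(n+1)) * x powi 1"
    using \<open>x \<noteq> 0\<close> by (metis power_int_add)
  then show ?thesis by simp
qed

lemma Dd_U: "Dd z (fls_X_inv * F1) (fls_X * F2) ((fls_X + fls_const z) * F3) p a = Dd z F1 F2 F3 p (a - 1)"
proof -
  have 1: "fls_nth (Hf z p * (fls_X_inv * F1)) (-a) = fls_nth (Hf z p * F1) (-(a-1))"
  proof -
    have "Hf z p * (fls_X_inv * F1) = fls_shift 1 (Hf z p * F1)"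
      by (simp add: fls_X_inv_times_conv_shift(1)[symmetric] mult.left_commute)
    then show ?thesis by simp
  qed
  have 2: "fls_nth (Kf z p * (fls_X * F2)) a = fls_nth (Kf z p * F2) (a-1)"
  proof -
    have "Kf z p * (fls_X * F2) = fls_shift (-1) (Kf z p * F2)"
      by (simp add: fls_X_times_conv_shift(1)[symmetric] mult.left_commute)
    then show ?thesis by simp
  qed
  have 3: "Mf z a * ((fls_X + fls_const z) * F3) = Mf z (a-1) * F3"
  proof -
    have "Mf z a * (fls_X + fls_const z) = Mf z (a - 1)"
      unfolding Mf_def using powi_step[OF X_plus_nz[of z], of a] by simp
    then show ?thesis by (simp add: mult.assoc[symmetric])
  qed
  show ?thesis unfolding Dd_def 1 2 3 ..
qed

lemma Dd_V: "Dd z ((fls_X_inv - fls_const z) * F1) ((fls_X - fls_const z) * F2) (fls_X * F3) p a = Dd z F1 F2 F3 (p - 1) a"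
proof -
  have 1: "Hf z p * ((fls_X_inv - fls_const z) * F1) = Hf z (p - 1) * F1"
  proof -
    have "Hf z p * (fls_X_inv - fls_const z) = Hf z (p - 1)"
      unfolding Hf_def using powi_step[OF Xinv_minus_nz[of z], of p] by simp
    then show ?thesis by (simp add: mult.assoc[symmetric])
  qed
  have 2: "Kf z p * ((fls_X - fls_const z) * F2) = Kf z (p - 1) * F2"
  proof -
    have "Kf z p * (fls_X - fls_const z) = Kf z (p - 1)"
      unfolding Kf_def using powi_step[OF X_minus_nz[of z], of p] by simp
    then show ?thesis by (simp add: mult.assoc[symmetric])
  qed
  have 3: "fls_nth (Mf z a * (fls_X * F3)) p = fls_nth (Mf z a * F3) (p-1)"
  proof -
    have "Mf z a * (fls_X * F3) = fls_shift (-1) (Mf z a * F3)"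
      by (simp add: fls_X_times_conv_shift(1)[symmetric] mult.left_commute)
    then show ?thesis by simp
  qed
  show ?thesis unfolding Dd_def 1 2 3 ..
qed

lemma Dd_Upow: "Dd z (fls_X_inv ^ k * F1) (fls_X ^ k * F2) ((fls_X + fls_const z) ^ k * F3) p a = Dd z F1 F2 F3 p (a - int k)"
proof (induction k arbitrary: a)
  case 0 then show ?case by simp
next
  case (Suc k)
  have "Dd z (fls_X_inv ^ Suc k * F1) (fls_X ^ Suc k * F2) ((fls_X + fls_const z) ^ Suc k * F3) p a
      = Dd z (fls_X_inv * (fls_X_inv ^ k * F1)) (fls_X * (fls_X ^ k * F2)) ((fls_X + fls_const z) * ((fls_X + fls_const z) ^ k * F3)) p a"
    by (simp only: power_Suc mult.assoc)
  also have "\<dots> = Dd z (fls_X_inv ^ k * F1) (fls_X ^ k * F2) ((fls_X + fls_const z) ^ k * F3) p (a - 1)"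
    by (rule Dd_U)
  also have "\<dots> = Dd z F1 F2 F3 p (a - 1 - int k)" by (rule Suc.IH)
  finally show ?case by (simp add: algebra_simps)
qed

lemma Dd_Vpow: "Dd z ((fls_X_inv - fls_const z) ^ k * F1) ((fls_X - fls_const z) ^ k * F2) (fls_X ^ k * F3) p a = Dd z F1 F2 F3 (p - int k) a"
proof (induction k arbitrary: p)
  case 0 then show ?case by simp
next
  case (Suc k)
  have "Dd z ((fls_X_inv - fls_const z) ^ Suc k * F1) ((fls_X - fls_const z) ^ Suc k * F2) (fls_X ^ Suc k * F3) p a
      = Dd z ((fls_X_inv - fls_const z) * ((fls_X_inv - fls_const z) ^ k * F1)) ((fls_X - fls_const z) * ((fls_X - fls_const z) ^ k * F2)) (fls_X * (fls_X ^ k * F3)) p a"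
    by (simp only: power_Suc mult.assoc)
  also have "\<dots> = Dd z ((fls_X_inv - fls_const z) ^ k * F1) ((fls_X - fls_const z) ^ k * F2) (fls_X ^ k * F3) (p - 1) a"
    by (rule Dd_V)
  also have "\<dots> = Dd z F1 F2 F3 (p - 1 - int k) a" by (rule Suc.IH)
  finally show ?case by (simp add: algebra_simps)
qed

definition polyF :: "complex poly \<Rightarrow> complex fls \<Rightarrow> complex fls" where
  "polyF P U = poly (map_poly fls_const P) U"

lemma polyF_0 [simp]: "polyF 0 U = 0"
  by (simp add: polyF_def)

lemma polyF_pCons: "polyF (pCons c q) U = fls_const c + U * polyF q U"
  by (cases "c = 0 \<and> q = 0") (auto simp: polyF_def map_poly_pCons)

lemma gch_pos: "0 \<le> m \<Longrightarrow> (of_int m :: complex) gchoose k = of_nat (nat m choose k)"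
  by (metis binomial_gbinomial int_nat_eq of_int_of_nat_eq)

lemma gch_neg: assumes "m < 0"
  shows "(of_int m :: complex) gchoose k = (-1)^k * of_nat ((nat (-m) - 1 + k) choose k)"
proof -
  have "(of_int m :: complex) = - of_nat (nat (-m))" using assms by simp
  then have "(of_int m :: complex) gchoose k = (-1)^k * (of_nat (nat (-m)) + of_nat k - 1 gchoose k)"
    by (simp add: gbinomial_minus)
  also have "(of_nat (nat (-m)) + of_nat k - 1 :: complex) = of_nat (nat (-m) - 1 + k)"
    using assms by (simp add: of_nat_diff)
  finally show ?thesis by (simp add: binomial_gbinomial)
qed

lemma m1pow_sq: "((-1::complex) ^ i) * (-1) ^ i = 1"
  by (metis power_minus1_even power_add mult_2)

lemma Dd_one_coeff:
  fixes p a :: int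
  shows "(if 0 \<le> (-p-1) - a then (-1)^nat ((-p-1)-a) * ((of_int (-p-1) :: complex) gchoose nat ((-p-1)-a)) else 0)
       - (if 0 \<le> a then (-1) powi (-p-1) * ((-1)^nat a * ((of_int (-p-1) :: complex) gchoose nat a)) else 0)
       - (if 0 \<le> p then (-1)^nat p * ((of_int (a+p) :: complex) gchoose nat p) else 0) = 0"
proof (cases "p < 0")
  case pneg: True
  define n where "n = -p-1"
  have n0: "0 \<le> n" using pneg by (simp add: n_def)
  have "(if 0 \<le> n - a then (-1)^nat (n-a) * ((of_int n :: complex) gchoose nat (n-a)) else 0)
       - (if 0 \<le> a then (-1) powi n * ((-1)^nat a * ((of_int n :: complex) gchoose nat a)) else 0) = 0"
  proof (cases "a < 0")
    case True
    have "nat n choose nat (n - a) = 0" using True n0 by (intro binomial_eq_0) simp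
    then show ?thesis using True n0 by (simp add: gch_pos)
  next
    case anneg: False
    show ?thesis
    proof (cases "a > n")
      case True
      have "nat n choose nat a = 0" using True n0 by (intro binomial_eq_0) simp
      then show ?thesis using True n0 by (simp add: gch_pos)
    next
      case False
      obtain i j where ij: "a = int i" "n - a = int j"
        using anneg False by (metis nonneg_int_cases not_less diff_ge_0_iff_ge)
      then have nij: "n = int (i + j)" by simp
      have s: "(i + j) choose j = (i + j) choose i"
        by (metis add_diff_cancel_left' binomial_symmetric le_add1)
      have t: "(-1::complex) ^ (i + j) * (-1) ^ i = (-1) ^ j"
        by (metis (no_types, lifting) m1pow_sq mult.commute mult.left_commute mult_1 power_add)
      have pw: "(-1::complex) powi n = (-1) ^ (i + j)" using power_int_of_nat[of "-1::complex" "i+j"] nij by simp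
      have na: "nat (n - a) = j" "nat a = i" using ij by simp_all
      have nn: "nat n = i + j" using nij by simp
      have A: "(of_int n :: complex) gchoose j = of_nat ((i+j) choose i)"
        using gch_pos[OF n0, of j] unfolding nn s .
      have B: "(of_int n :: complex) gchoose i = of_nat ((i+j) choose i)"
        using gch_pos[OF n0, of i] unfolding nn .
      have "(-1) ^ j * (of_nat ((i+j) choose i) :: complex) - (-1) ^ (i + j) * ((-1) ^ i * of_nat ((i+j) choose i)) = 0"
        by (simp add: mult.assoc[symmetric] t)
      then show ?thesis using anneg False unfolding na pw A B by simp
    qed
  qed
  then show ?thesis using pneg unfolding n_def[symmetric] by simp
next
  case False
  then obtain q where q: "p = int q" by (metis nonneg_int_cases not_less)
  have pw: "(-1::complex) powi (-p-1) = - ((-1) ^ q)"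
  proof -
    have "(-1::complex) powi (-p-1) = inverse ((-1) ^ (q+1))"
    proof -
      have "-p-1 = - int (q+1)" using q by simp
      then show ?thesis by (simp only: power_int_minus power_int_of_nat)
    qed
    also have "inverse ((-1::complex) ^ (q+1)) = - ((-1) ^ q)"
    proof (rule inverse_unique)
      show "(-1::complex)^(q+1) * (- ((-1)^q)) = 1" using m1pow_sq[of q] by (simp add: mult.commute)
    qed
    finally show ?thesis .
  qed
  have p0: "0 \<le> p" using q by simp
  have nq: "nat p = q" using q by simp
  show ?thesis
  proof (cases "0 \<le> a")
    case True
    then obtain i where i: "a = int i" by (metis nonneg_int_cases)
    have ni: "nat a = i" using i by simp
    have nc: "\<not> (0 \<le> (-p-1) - a)" using i q by simp
    have g2: "(of_int (-p-1) :: complex) gchoose i = (-1)^i * of_nat ((q + i) choose i)"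
      using gch_neg[of "-p-1" i] q by (simp add: nat_add_distrib)
    have ap: "0 \<le> a + p" using i q by simp
    have n3: "nat (a+p) = q + i" using i q by simp
    have s3: "(q + i) choose q = (q + i) choose i"
      by (metis add_diff_cancel_left' binomial_symmetric le_add1)
    have g3: "(of_int (a+p) :: complex) gchoose q = of_nat ((q + i) choose i)"
      using gch_pos[OF ap, of q] unfolding n3 s3 .
    have X: "(-1) powi (-p-1) * ((-1)^nat a * ((of_int (-p-1) :: complex) gchoose nat a))
          = - ((-1)^q * of_nat ((q + i) choose i))"
    proof -
      have "(-1) powi (-p-1) * ((-1)^nat a * ((of_int (-p-1) :: complex) gchoose nat a))
          = - ((-1)^q * (((-1)^i * (-1)^i) * of_nat ((q + i) choose i)))"
        unfolding ni g2 pw by (simp add: mult_ac)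
      then show ?thesis unfolding m1pow_sq by simp
    qed
    have Y: "(-1)^nat p * ((of_int (a+p) :: complex) gchoose nat p) = (-1)^q * of_nat ((q + i) choose i)"
      unfolding nq g3 ..
    show ?thesis unfolding if_not_P[OF nc] if_P[OF True] if_P[OF p0] X Y by simp
  next
    case aneg: False
    show ?thesis
    proof (cases "a \<le> -p-1")
      case True
      obtain j where j: "-p-1-a = int j" using True by (metis diff_ge_0_iff_ge nonneg_int_cases)
      have nj: "nat (-p-1-a) = j" using j by simp
      have c1: "0 \<le> (-p-1) - a" using True by simp
      have g1: "(of_int (-p-1) :: complex) gchoose j = (-1)^j * of_nat ((q + j) choose j)"
        using gch_neg[of "-p-1" j] q by (simp add: nat_add_distrib)
      have e: "a + p = - 1 - int j" using j by simp
      have g3: "(of_int (a+p) :: complex) gchoose q = (-1)^q * of_nat ((q + j) choose j)"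
      proof -
        have "(of_int (a+p) :: complex) gchoose q = (-1)^q * of_nat ((nat (-(a+p)) - 1 + q) choose q)"
          by (rule gch_neg) (use e in simp)
        also have "nat (-(a+p)) - 1 + q = q + j" using e by simp
        also have "(q + j) choose q = (q + j) choose j"
          by (metis add_diff_cancel_left' binomial_symmetric le_add1)
        finally show ?thesis .
      qed
      have X: "(-1)^nat ((-p-1)-a) * ((of_int (-p-1) :: complex) gchoose nat ((-p-1)-a)) = of_nat ((q + j) choose j)"
      proof -
        have "(-1)^nat ((-p-1)-a) * ((of_int (-p-1) :: complex) gchoose nat ((-p-1)-a))
           = ((-1)^j * (-1)^j) * of_nat ((q + j) choose j)"
          unfolding nj g1 by (simp only: mult_ac)
        then show ?thesis unfolding m1pow_sq by simp
      qed
      have Y: "(-1)^nat p * ((of_int (a+p) :: complex) gchoose nat p) = of_nat ((q + j) choose j)"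
      proof -
        have "(-1)^nat p * ((of_int (a+p) :: complex) gchoose nat p) = ((-1)^q * (-1)^q) * of_nat ((q + j) choose j)"
          unfolding nq g3 by (simp only: mult_ac)
        then show ?thesis unfolding m1pow_sq by simp
      qed
      show ?thesis unfolding if_P[OF c1] if_not_P[OF aneg] if_P[OF p0] X Y by simp
    next
      case False
      have b0: "nat (a + p) choose q = 0" using False aneg q by (intro binomial_eq_0) simp
      have ap: "0 \<le> a + p" using False by simp
      have g: "(of_int (a+p) :: complex) gchoose nat p = 0" unfolding nq gch_pos[OF ap] b0 by simp
      have c1: "\<not> (0 \<le> (-p-1) - a)" using False by simp
      show ?thesis unfolding if_not_P[OF c1] if_not_P[OF aneg] if_P[OF p0] g by simp
    qed
  qed
qed

lemma Dd_one: assumes "z \<noteq> 0" shows "Dd z 1 1 1 p a = 0"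
proof -
  have "Dd z 1 1 1 p a = E1 z p a - E2 z p a - E3 z p a"
    unfolding Dd_def using C1[of z p "-a"] C2[OF assms, of p a] C3[OF assms, of a p] by simp
  also have "E1 z p a = (if 0 \<le> (-p-1) - a then (-1)^nat ((-p-1)-a) * ((of_int (-p-1) :: complex) gchoose nat ((-p-1)-a)) else 0) * z powi (-p-1-a)"
    by (simp add: E1_closed)
  also have "E2 z p a = (if 0 \<le> a then (-1) powi (-p-1) * ((-1)^nat a * ((of_int (-p-1) :: complex) gchoose nat a)) else 0) * z powi (-p-1-a)"
    by (simp add: E2_closed)
  also have "E3 z p a = (if 0 \<le> p then (-1)^nat p * ((of_int (a+p) :: complex) gchoose nat p) else 0) * z powi (-p-1-a)"
  proof -
    have e: "-a-p-1 = -p-1-a" by simp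
    show ?thesis unfolding E3_closed e by simp
  qed
  finally show ?thesis using Dd_one_coeff[of p a] by (simp only: left_diff_distrib[symmetric] mult_zero_left)
qed

lemma Dd_poly:
  assumes "z \<noteq> 0"
  shows "Dd z (polyF P fls_X_inv) (polyF P fls_X) (polyF P (fls_X + fls_const z)) p a = 0"
proof (induction P arbitrary: p a)
  case 0 then show ?case by (simp add: Dd_zero)
next
  case (pCons c q)
  have "Dd z (polyF (pCons c q) fls_X_inv) (polyF (pCons c q) fls_X) (polyF (pCons c q) (fls_X + fls_const z)) p a
      = Dd z (fls_const c * 1) (fls_const c * 1) (fls_const c * 1) p a
        + Dd z (fls_X_inv * polyF q fls_X_inv) (fls_X * polyF q fls_X) ((fls_X + fls_const z) * polyF q (fls_X + fls_const z)) p a"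
    unfolding polyF_pCons Dd_add[symmetric] by simp
  also have "\<dots> = c * Dd z 1 1 1 p a + Dd z (polyF q fls_X_inv) (polyF q fls_X) (polyF q (fls_X + fls_const z)) p (a - 1)"
    unfolding Dd_cmult Dd_U ..
  also have "\<dots> = 0" using Dd_one[OF assms] pCons.IH by simp
  finally show ?case .
qed

lemma cancel3: "(A::'a::field) \<noteq> 0 \<Longrightarrow> B \<noteq> 0 \<Longrightarrow> A * (B * (Q / (A * B))) = Q"
  by (simp add: field_simps)

definition Fr :: "complex poly \<Rightarrow> nat \<Rightarrow> complex fls \<Rightarrow> complex \<Rightarrow> complex fls" where
  "Fr P N U z = polyF P U / (U ^ N * (U - fls_const z) ^ N)"

lemma Dd_rat:
  assumes "z \<noteq> 0"
  shows "Dd z (Fr P N fls_X_inv z) (Fr P N fls_X z) (Fr P N (fls_X + fls_const z) z) p a = 0"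
proof -
  let ?F1 = "Fr P N fls_X_inv z" and ?F2 = "Fr P N fls_X z" and ?F3 = "Fr P N (fls_X + fls_const z) z"
  have e3: "fls_X + fls_const z - fls_const z = (fls_X :: complex fls)" by simp
  have n1: "(fls_X_inv :: complex fls) \<noteq> 0"
  proof
    assume "(fls_X_inv :: complex fls) = 0"
    then have "fls_nth (fls_X_inv :: complex fls) (-1) = 0" by simp
    then show False by simp
  qed
  have n2: "(fls_X :: complex fls) \<noteq> 0" by simp
  have r1: "fls_X_inv ^ N * ((fls_X_inv - fls_const z) ^ N * ?F1) = polyF P fls_X_inv"
    unfolding Fr_def using n1 Xinv_minus_nz[of z] by (intro cancel3 power_not_zero)
  have r2: "fls_X ^ N * ((fls_X - fls_const z) ^ N * ?F2) = polyF P fls_X"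
    unfolding Fr_def using n2 X_minus_nz[of z] by (intro cancel3 power_not_zero)
  have r3: "(fls_X + fls_const z) ^ N * (fls_X ^ N * ?F3) = polyF P (fls_X + fls_const z)"
    unfolding Fr_def e3 using n2 X_plus_nz[of z] by (intro cancel3 power_not_zero)
  have "Dd z ?F1 ?F2 ?F3 p a = Dd z ((fls_X_inv - fls_const z) ^ N * ?F1) ((fls_X - fls_const z) ^ N * ?F2) (fls_X ^ N * ?F3) (p + int N) a"
    using Dd_Vpow[of z N ?F1 ?F2 ?F3 "p + int N" a] by simp
  also have "\<dots> = Dd z (fls_X_inv ^ N * ((fls_X_inv - fls_const z) ^ N * ?F1)) (fls_X ^ N * ((fls_X - fls_const z) ^ N * ?F2)) ((fls_X + fls_const z) ^ N * (fls_X ^ N * ?F3)) (p + int N) (a + int N)"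
    using Dd_Upow[of z N _ _ _ "p + int N" "a + int N"] by simp
  also have "\<dots> = 0" unfolding r1 r2 r3 by (rule Dd_poly[OF assms])
  finally show ?thesis .
qed

lemma eventually_avoid_finite: "finite S \<Longrightarrow> eventually (\<lambda>x. x \<notin> S) (at (a::complex))"
  using islimpt_finite islimpt_iff_eventually by blast

lemma has_sum_from_reindex:
  fixes \<phi> :: "int \<Rightarrow> 'a::{comm_monoid_add,topological_space}"
  assumes "inj h" "\<And>m. m \<notin> range h \<Longrightarrow> \<phi> m = 0" "((\<lambda>k. \<phi> (h k)) has_sum S) UNIV"
  shows "(\<phi> has_sum S) UNIV"
proof -
  have "(\<phi> has_sum S) (range h)"
    using has_sum_reindex[of h UNIV \<phi> S] assms(1,3) by (simp add: comp_def)
  moreover have "(\<phi> has_sum S) (range h) \<longleftrightarrow> (\<phi> has_sum S) UNIV"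
    by (rule has_sum_cong_neutral) (use assms(2) in auto)
  ultimately show ?thesis by simp
qed

lemma powi_le_neg:
  fixes s t :: real
  assumes "0 < t" "t \<le> s" "m \<le> 0"
  shows "s powi m \<le> t powi m"
proof (cases "m = 0")
  case True then show ?thesis by simp
next
  case False
  then show ?thesis using power_int_antimono[of t s m] assms by simp
qed

lemma entire_part_zero:
  fixes d :: "int \<Rightarrow> complex" and r :: real
  assumes r: "r \<ge> 0"
  and H: "\<And>x. norm x > r \<Longrightarrow> (\<lambda>m. norm (d m * x powi m)) summable_on UNIV \<and> ((\<lambda>m. d m * x powi m) has_sum 0) UNIV"
  and m: "m > 0"
  shows "d m = 0"
proof -
  define a where "a = (\<lambda>k::nat. if k = 0 then 0 else d (int k))"
  define A where "A = Abs_fps a"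
  define P where "P = int ` {k::nat. k \<ge> 1}"
  have normsum: "summable (\<lambda>k. norm (d (int k) * x ^ k))" if "norm x > r" for x
  proof -
    have "(\<lambda>m. norm (d m * x powi m)) summable_on (int ` UNIV)"
      using H[OF that] summable_on_subset_banach by blast
    then have "(\<lambda>k. norm (d (int k) * x powi (int k))) summable_on UNIV"
      using summable_on_reindex[of int UNIV "\<lambda>m. norm (d m * x powi m)"] by (simp add: comp_def)
    then show ?thesis by (subst (asm) summable_on_UNIV_nonneg_real_iff) (auto simp: power_int_of_nat)
  qed
  have ps: "summable (\<lambda>k. norm (a k * x ^ k))" for x
  proof -
    define t where "t = norm x + r + 1"
    have nx: "norm x \<ge> 0" by simp
    have tt: "t > r" "t \<ge> 0" "norm x \<le> t" unfolding t_def using r nx by linarith+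
    have t: "norm (complex_of_real t) > r" "norm x \<le> t" using tt by auto
    have "summable (\<lambda>k. norm (d (int k) * complex_of_real t ^ k))" by (rule normsum[OF t(1)])
    then show ?thesis
    proof (rule summable_comparison_test'[where N=0])
      fix k :: nat
      have "norm (a k * x ^ k) \<le> norm (d (int k) * x ^ k)" by (simp add: a_def)
      also have "\<dots> = norm (d (int k)) * norm x ^ k" by (simp add: norm_mult norm_power)
      also have "\<dots> \<le> norm (d (int k)) * t ^ k"
        using t(2) by (intro mult_left_mono power_mono) auto
      also have "\<dots> = norm (d (int k) * complex_of_real t ^ k)"
        using tt by (simp add: norm_mult norm_power)
      finally show "norm (norm (a k * x ^ k)) \<le> norm (d (int k) * complex_of_real t ^ k)" by simp
    qed
  qed
  have conv: "norm x < fps_conv_radius A" for x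
  proof -
    have "summable (\<lambda>k. a k * complex_of_real (norm x + 1) ^ k)"
      using ps[of "complex_of_real (norm x + 1)"] by (rule summable_norm_cancel)
    then have "conv_radius a \<ge> norm (complex_of_real (norm x + 1))" by (rule conv_radius_geI)
    moreover have "norm (complex_of_real (norm x + 1)) = norm x + 1" by simp
    moreover have "fps_nth (Abs_fps a) = a" by (rule ext) simp
    ultimately have "ereal (norm x + 1) \<le> fps_conv_radius A" unfolding A_def fps_conv_radius_def by simp
    moreover have "ereal (norm x) < ereal (norm x + 1)" by simp
    ultimately show ?thesis by (meson less_le_trans)
  qed
  define E where "E = eval_fps A"
  have holE: "E holomorphic_on UNIV"
    unfolding E_def by (rule holomorphic_on_eval_fps) (auto simp: conv)
  have E0: "E 0 = 0" unfolding E_def by (simp add: eval_fps_at_0 A_def a_def)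
  have Ehas: "((\<lambda>m. d m * x powi m) has_sum E x) P" for x
  proof -
    have "(\<lambda>k. a k * x ^ k) sums E x"
      unfolding E_def using sums_eval_fps[OF conv[of x]] by (simp add: A_def)
    then have "((\<lambda>k. a k * x ^ k) has_sum E x) UNIV"
      by (intro norm_summable_imp_has_sum ps)
    then have "((\<lambda>k. a k * x ^ k) has_sum E x) {k. k \<ge> 1}"
      by (subst (asm) has_sum_cong_neutral[where T="{k. k \<ge> 1}" and g="\<lambda>k. a k * x ^ k"]) (auto simp: a_def)
    then have "(((\<lambda>m. d m * x powi m) \<circ> int) has_sum E x) {k. k \<ge> 1}"
      by (rule has_sum_cong[THEN iffD1, rotated]) (auto simp: a_def power_int_of_nat)
    then show ?thesis unfolding P_def by (subst has_sum_reindex) auto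
  qed
  define t0 where "t0 = r + 1"
  have t0: "t0 > 0" "t0 > r" using r by (auto simp: t0_def)
  define B where "B = infsum (\<lambda>m. norm (d m * complex_of_real t0 powi m)) (UNIV - P)"
  have nt0: "norm (complex_of_real t0) > r" using t0 by simp
  have bound: "norm (E x) \<le> B" if "norm x \<ge> t0" for x
  proof -
    have xr: "norm x > r" using that t0 by simp
    have sm: "(\<lambda>m. d m * x powi m) summable_on (UNIV - P)"
      using H[OF xr] by (meson has_sum_imp_summable subset_UNIV summable_on_subset_banach Diff_subset)
    then obtain S' where S': "((\<lambda>m. d m * x powi m) has_sum S') (UNIV - P)"
      by (auto simp: summable_on_def)
    have "((\<lambda>m. d m * x powi m) has_sum (E x + S')) (P \<union> (UNIV - P))"
      by (rule has_sum_Un_disjoint[OF Ehas S']) auto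
    then have "((\<lambda>m. d m * x powi m) has_sum (E x + S')) UNIV" by simp
    then have "E x + S' = 0" using H[OF xr] has_sum_unique by blast
    then have "E x = - S'" by (simp add: eq_neg_iff_add_eq_0)
    then have "norm (E x) = norm (infsum (\<lambda>m. d m * x powi m) (UNIV - P))"
      using S' infsumI by fastforce
    also have "\<dots> \<le> infsum (\<lambda>m. norm (d m * x powi m)) (UNIV - P)"
    proof (rule norm_infsum_bound)
      show "(\<lambda>m. norm (d m * x powi m)) summable_on UNIV - P"
        using H[OF xr] summable_on_subset_banach by blast
    qed
    also have "\<dots> \<le> B"
      unfolding B_def
    proof (rule infsum_mono)
      show "(\<lambda>m. norm (d m * x powi m)) summable_on UNIV - P"
        using H[OF xr] summable_on_subset_banach by blast
      show "(\<lambda>m. norm (d m * complex_of_real t0 powi m)) summable_on UNIV - P"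
        using H[OF nt0] summable_on_subset_banach by blast
      fix m assume "m \<in> UNIV - P"
      then have mP: "m \<notin> P" by simp
      have "m \<le> 0"
      proof (rule ccontr)
        assume "\<not> m \<le> 0"
        then have "m = int (nat m)" "nat m \<ge> 1" by simp_all
        then have "m \<in> P" unfolding P_def by blast
        then show False using mP by simp
      qed
      have "norm (x powi m) \<le> norm (complex_of_real t0 powi m)"
        unfolding norm_power_int using powi_le_neg[OF t0(1) that \<open>m \<le> 0\<close>] t0 by simp
      then show "norm (d m * x powi m) \<le> norm (d m * complex_of_real t0 powi m)"
        by (simp add: norm_mult mult_left_mono)
    qed
    finally show ?thesis .
  qed
  have "bounded (range E)"
  proof -
    have "compact (E ` cball 0 t0)"
      by (intro compact_continuous_image holomorphic_on_imp_continuous_on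
                holomorphic_on_subset[OF holE]) auto
    then obtain B1 where B1: "\<And>y. y \<in> E ` cball 0 t0 \<Longrightarrow> norm y \<le> B1"
      by (meson bounded_iff compact_imp_bounded)
    have "norm (E x) \<le> max B1 B" for x
    proof (cases "norm x \<le> t0")
      case True then show ?thesis using B1[of "E x"] by force
    next
      case False then show ?thesis using bound[of x] by force
    qed
    then show ?thesis unfolding bounded_iff by blast
  qed
  then have "E constant_on UNIV" using Liouville_theorem[OF holE] by blast
  then have Ez: "E x = 0" for x using E0 by (metis constant_on_def UNIV_I)
  have "A = 0"
  proof (rule eval_fps_eqD)
    show "fps_conv_radius A > 0" using conv[of 0] by (simp add: zero_ereal_def)
    show "fps_conv_radius (0 :: complex fps) > 0" by simp
    show "\<forall>\<^sub>F z in nhds 0. eval_fps A z = eval_fps 0 z" using Ez by (simp add: E_def)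
  qed
  then have "fps_nth A (nat m) = 0" by simp
  then show ?thesis using m by (simp add: A_def a_def)
qed

lemma twosided_zero:
  fixes d :: "int \<Rightarrow> complex" and r :: real
  assumes r: "r \<ge> 0"
  and H: "\<And>x. norm x > r \<Longrightarrow> (\<lambda>m. norm (d m * x powi m)) summable_on UNIV \<and> ((\<lambda>m. d m * x powi m) has_sum 0) UNIV"
  shows "d m = 0"
proof -
  have pos: "d m = 0" if "m > 0" for m using entire_part_zero[OF r H that] by blast
  define b where "b = (\<lambda>k::nat. d (- int k))"
  define Bf where "Bf = Abs_fps b"
  define \<rho> where "\<rho> = 1 / (r + 1)"
  have \<rho>: "\<rho> > 0" using r by (simp add: \<rho>_def)
  define h where "h = (\<lambda>k::nat. - int k)"
  have injh: "inj h" by (simp add: h_def inj_def)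
  have outh: "m > 0" if "m \<notin> range h" for m
  proof (rule ccontr)
    assume "\<not> m > 0"
    then have "m = h (nat (-m))" by (simp add: h_def)
    then show False using that by (metis rangeI)
  qed
  have hy: "((\<lambda>k. b k * y ^ k) has_sum 0) UNIV \<and> summable (\<lambda>k. norm (b k * y ^ k))"
    if y: "y \<noteq> 0" "norm y < \<rho>" for y
  proof -
    define x where "x = inverse y"
    have "norm y * (r + 1) < 1" using y(2) r by (simp add: \<rho>_def field_simps)
    then have "r + 1 < 1 / norm y" using y(1) by (simp add: field_simps)
    then have xr: "norm x > r" unfolding x_def by (simp add: norm_inverse divide_inverse)
    have e: "d (h k) * x powi (h k) = b k * y ^ k" for k
    proof -
      have "x powi (h k) = y ^ k"
        unfolding h_def x_def power_int_minus power_int_of_nat power_inverse inverse_inverse_eq ..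
      then show ?thesis by (simp add: b_def h_def)
    qed
    have "((\<lambda>m. d m * x powi m) has_sum 0) UNIV" using H[OF xr] by blast
    then have "((\<lambda>m. d m * x powi m) has_sum 0) (range h)"
      by (subst has_sum_cong_neutral[where T=UNIV and g="\<lambda>m. d m * x powi m"]) (auto dest: outh pos)
    then have s1: "((\<lambda>k. b k * y ^ k) has_sum 0) UNIV"
      using has_sum_reindex[OF inj_on_subset[OF injh], of UNIV "\<lambda>m. d m * x powi m" 0] e
      by (simp add: comp_def)
    have "(\<lambda>m. norm (d m * x powi m)) summable_on (range h)"
      using H[OF xr] summable_on_subset_banach by blast
    then have "(\<lambda>k. norm (b k * y ^ k)) summable_on UNIV"
      using summable_on_reindex[OF inj_on_subset[OF injh], of UNIV "\<lambda>m. norm (d m * x powi m)"] e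
      by (simp add: comp_def)
    then have s2: "summable (\<lambda>k. norm (b k * y ^ k))"
      by (subst (asm) summable_on_UNIV_nonneg_real_iff) auto
    show ?thesis using s1 s2 by blast
  qed
  have conv: "fps_conv_radius Bf > 0"
  proof -
    define y0 where "y0 = complex_of_real (\<rho> / 2)"
    have y0: "y0 \<noteq> 0" "norm y0 < \<rho>" "norm y0 = \<rho> / 2" using \<rho> by (auto simp: y0_def)
    have "summable (\<lambda>k. norm (b k * y0 ^ k))" by (rule conjunct2[OF hy[OF y0(1,2)]])
    then have "summable (\<lambda>k. b k * y0 ^ k)" by (rule summable_norm_cancel)
    then have "conv_radius b \<ge> norm y0" by (rule conv_radius_geI)
    moreover have "fps_nth Bf = b" unfolding Bf_def by (rule ext) simp
    ultimately have "fps_conv_radius Bf \<ge> ereal (\<rho> / 2)" using y0(3) by (simp add: fps_conv_radius_def)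
    moreover have "0 < ereal (\<rho> / 2)" using \<rho> by simp
    ultimately show ?thesis using less_le_trans by blast
  qed
  have ev0: "eval_fps Bf y = 0" if "y \<noteq> 0" "norm y < \<rho>" for y
  proof -
    have "(\<lambda>k. b k * y ^ k) sums 0" using hy[OF that] has_sum_imp_sums by blast
    then show ?thesis unfolding eval_fps_def Bf_def by (simp add: sums_iff)
  qed
  have evat: "eventually (\<lambda>y. eval_fps Bf y = 0) (at 0)"
    unfolding eventually_at using \<rho> ev0 by (intro exI[of _ \<rho>]) (auto simp: dist_norm)
  have "isCont (eval_fps Bf) 0"
    using conv by (intro continuous_eval_fps) (simp add: zero_ereal_def)
  then have l1: "(eval_fps Bf \<longlongrightarrow> eval_fps Bf 0) (at 0)" by (simp add: isCont_def)
  have l2: "(eval_fps Bf \<longlongrightarrow> 0) (at 0)" using evat by (rule tendsto_eventually)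
  have z0: "eval_fps Bf 0 = 0" using tendsto_unique[OF _ l1 l2] by simp
  have "Bf = 0"
  proof (rule eval_fps_eqD)
    show "fps_conv_radius Bf > 0" by (rule conv)
    show "fps_conv_radius (0 :: complex fps) > 0" by simp
    have "eventually (\<lambda>y. y \<in> ball 0 \<rho>) (nhds (0::complex))"
      using \<rho> by (intro eventually_nhds_in_open) auto
    then show "\<forall>\<^sub>F y in nhds 0. eval_fps Bf y = eval_fps 0 y"
    proof eventually_elim
      case (elim y)
      then have "norm y < \<rho>" by simp
      then show ?case using ev0[of y] z0 by (cases "y = 0") auto
    qed
  qed
  then have bz: "b k = 0" for k by (metis Bf_def fps_nth_Abs_fps fps_zero_nth)
  show ?thesis
  proof (cases "m > 0")
    case True then show ?thesis by (rule pos)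
  next
    case False
    then have "m = - int (nat (-m))" by simp
    then show ?thesis using bz[of "nat (-m)"] unfolding b_def by metis
  qed
qed

definition Rf :: "complex poly \<Rightarrow> nat \<Rightarrow> complex \<Rightarrow> complex \<Rightarrow> complex" where
  "Rf P N z x = poly P x / (x ^ N * (x - z) ^ N)"

lemma polyF_laurent:
  assumes "g has_laurent_expansion U"
  shows "(\<lambda>x. poly P (g x)) has_laurent_expansion polyF P U"
proof (induction P)
  case 0 then show ?case by simp
next
  case (pCons c q)
  have "(\<lambda>x. c + g x * poly q (g x)) has_laurent_expansion fls_const c + U * polyF q U"
    by (intro laurent_expansion_intros assms pCons.IH)
  then show ?case by (simp add: polyF_pCons)
qed

lemma R_laurent:
  assumes "g has_laurent_expansion U"
  shows "(\<lambda>x. Rf P N z (g x)) has_laurent_expansion Fr P N U z"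
  unfolding Rf_def Fr_def by (intro laurent_expansion_intros polyF_laurent assms)

lemma Rinf: "(\<lambda>y. Rf P N z (inverse y)) has_laurent_expansion Fr P N fls_X_inv z"
  by (rule R_laurent[OF has_laurent_expansion_fls_X_inv])

lemma R0: "(\<lambda>x. Rf P N z x) has_laurent_expansion Fr P N fls_X z"
  using R_laurent[OF has_laurent_expansion_fps_X] by simp

lemma Rz: "(\<lambda>x. Rf P N z (x + z)) has_laurent_expansion Fr P N (fls_X + fls_const z) z"
  by (rule R_laurent[OF has_laurent_expansion_add[OF has_laurent_expansion_fps_X has_laurent_expansion_const]])

lemma series_inf:
  assumes z: "z \<noteq> 0" and x: "norm x > norm z"
  shows "((\<lambda>m. fls_nth (Fr P N fls_X_inv z) (-m) * x powi m) has_sum Rf P N z x) UNIV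
       \<and> (\<lambda>m. norm (fls_nth (Fr P N fls_X_inv z) (-m) * x powi m)) summable_on UNIV"
proof -
  define F where "F = Fr P N fls_X_inv z"
  define g where "g = (\<lambda>y. Rf P N z (inverse y))"
  define \<rho> where "\<rho> = 1 / norm z"
  have gF: "g has_laurent_expansion F" unfolding g_def F_def by (rule Rinf)
  have hol: "g holomorphic_on eball 0 (ereal \<rho>) - {0}"
  proof -
    have "g holomorphic_on ball 0 \<rho> - {0}"
      unfolding g_def Rf_def
    proof (intro holomorphic_intros)
      fix y :: complex assume y: "y \<in> ball 0 \<rho> - {0}"
      then have "norm y < 1 / norm z" "y \<noteq> 0" by (auto simp: \<rho>_def)
      then have ny0: "norm y > 0" "norm y * norm z < 1" using z by (auto simp: field_simps)
      then have "norm z * norm y < 1" by (simp add: mult.commute)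
      then have "norm z < 1 / norm y" using ny0 by (simp add: pos_less_divide_eq)
      then have "norm (inverse y) > norm z" by (simp add: norm_inverse norm_divide inverse_eq_divide)
      then have "inverse y - z \<noteq> 0" by auto
      then show "inverse y ^ N * (inverse y - z) ^ N \<noteq> 0" using \<open>y \<noteq> 0\<close> by simp
    qed (auto)
    then show ?thesis by simp
  qed
  have convF: "fls_conv_radius F \<ge> \<rho>" by (rule fls_conv_radius_ge[OF gF hol])
  define y where "y = inverse x"
  have x0: "x \<noteq> 0" using x by auto
  have y0: "y \<noteq> 0" using x0 by (simp add: y_def)
  have ny: "norm y < \<rho>"
  proof -
    have "inverse (norm x) < inverse (norm z)" using x z by (intro less_imp_inverse_less) auto
    then show ?thesis unfolding y_def \<rho>_def by (simp add: norm_inverse norm_divide inverse_eq_divide)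
  qed
  have ylt: "ereal (norm y) < fls_conv_radius F"
  proof -
    have "ereal (norm y) < ereal \<rho>" using ny by simp
    then show ?thesis using convF by (rule less_le_trans)
  qed
  have evalF: "eval_fls F y = Rf P N z x"
  proof -
    have "eval_fls F y = g y"
      by (rule eval_fls_eqI[OF gF hol]) (use y0 ny in auto)
    then show ?thesis by (simp add: g_def y_def)
  qed
  define s where "s = fls_subdegree F"
  have sums: "(\<lambda>k. fls_nth F (int k + s) * y powi (int k + s)) sums Rf P N z x"
    using sums_eval_fls[OF ylt] y0 evalF by (simp add: s_def)
  have ns0: "summable (\<lambda>k. norm (fls_nth F (int k + s) * y ^ k))"
    using norm_summable_fls'[OF ylt] by (simp add: s_def)
  have ns: "summable (\<lambda>k. norm (fls_nth F (int k + s) * y powi (int k + s)))"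
  proof -
    have "summable (\<lambda>k. norm (fls_nth F (int k + s) * y ^ k) * norm (y powi s))"
      by (rule summable_mult2[OF ns0])
    moreover have "norm (fls_nth F (int k + s) * y powi (int k + s)) = norm (fls_nth F (int k + s) * y ^ k) * norm (y powi s)" for k
      using y0 by (simp add: power_int_add norm_mult power_int_of_nat mult_ac)
    ultimately show ?thesis by simp
  qed
  have hs: "((\<lambda>k. fls_nth F (int k + s) * y powi (int k + s)) has_sum Rf P N z x) UNIV"
    by (rule norm_summable_imp_has_sum[OF ns sums])
  define h where "h = (\<lambda>k::nat. - (int k + s))"
  have injh: "inj h" by (simp add: h_def inj_def)
  have outh: "fls_nth F (-m) = 0" if "m \<notin> range h" for m
  proof -
    have "\<not> (-m - s \<ge> 0)"
    proof
      assume "-m - s \<ge> 0"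
      then have "m = h (nat (-m - s))" by (simp add: h_def)
      then show False using that by (metis rangeI)
    qed
    then have "-m < s" by simp
    then show ?thesis by (simp add: s_def)
  qed
  have eh: "fls_nth F (- h k) * x powi (h k) = fls_nth F (int k + s) * y powi (int k + s)" for k
  proof -
    have "x powi (h k) = y powi (int k + s)"
      unfolding h_def y_def power_int_inverse power_int_minus ..
    moreover have "- h k = int k + s" by (simp add: h_def)
    ultimately show ?thesis by simp
  qed
  have A: "((\<lambda>m. fls_nth F (-m) * x powi m) has_sum Rf P N z x) UNIV"
    by (rule has_sum_from_reindex[OF injh]) (use outh hs eh in auto)
  obtain SN where SN: "((\<lambda>k. norm (fls_nth F (int k + s) * y powi (int k + s))) has_sum SN) UNIV"
    using ns summable_on_UNIV_nonneg_real_iff[of "\<lambda>k. norm (fls_nth F (int k + s) * y powi (int k + s))"]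
    by (auto simp: summable_on_def)
  have "((\<lambda>m. norm (fls_nth F (-m) * x powi m)) has_sum SN) UNIV"
    by (rule has_sum_from_reindex[OF injh]) (use outh SN eh in auto)
  then have B: "(\<lambda>m. norm (fls_nth F (-m) * x powi m)) summable_on UNIV"
    by (auto simp: summable_on_def)
  show ?thesis using A B by (simp add: F_def)
qed

lemma coeff_eq:
  assumes z: "z \<noteq> 0"
  and Hc: "\<And>x. norm x > norm z \<Longrightarrow> (\<lambda>m. norm (c m * x powi m)) summable_on UNIV \<and> ((\<lambda>m. c m * x powi m) has_sum Rf P N z x) UNIV"
  shows "c m = fls_nth (Fr P N fls_X_inv z) (-m)"
proof -
  define F where "F = Fr P N fls_X_inv z"
  define d where "d = (\<lambda>m. c m - fls_nth F (-m))"
  have "d m = 0"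
  proof (rule twosided_zero[of "norm z"])
    fix x :: complex assume x: "norm x > norm z"
    have s1: "(\<lambda>m. norm (c m * x powi m)) summable_on UNIV" "((\<lambda>m. c m * x powi m) has_sum Rf P N z x) UNIV"
      using Hc[OF x] by auto
    have s2: "(\<lambda>m. norm (fls_nth F (-m) * x powi m)) summable_on UNIV" "((\<lambda>m. fls_nth F (-m) * x powi m) has_sum Rf P N z x) UNIV"
      using series_inf[OF z x, of P N] by (auto simp: F_def)
    have "((\<lambda>m. c m * x powi m + (- (fls_nth F (-m) * x powi m))) has_sum (Rf P N z x + - Rf P N z x)) UNIV"
      by (intro has_sum_add s1(2) has_sum_uminusI s2(2))
    then have hs0: "((\<lambda>m. d m * x powi m) has_sum 0) UNIV"
      by (simp add: d_def algebra_simps)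
    have "(\<lambda>m. norm (c m * x powi m) + norm (fls_nth F (-m) * x powi m)) summable_on UNIV"
      by (intro summable_on_add s1(1) s2(1))
    then have "(\<lambda>m. norm (d m * x powi m)) summable_on UNIV"
    proof (rule summable_on_comparison_test)
      fix m
      show "0 \<le> norm (d m * x powi m)" by simp
      have "norm (d m * x powi m) = norm (c m * x powi m - fls_nth F (-m) * x powi m)"
        by (simp add: d_def algebra_simps)
      also have "\<dots> \<le> norm (c m * x powi m) + norm (fls_nth F (-m) * x powi m)"
        by (rule norm_triangle_ineq4)
      finally show "norm (d m * x powi m) \<le> norm (c m * x powi m) + norm (fls_nth F (-m) * x powi m)" .
    qed
    then show "(\<lambda>m. norm (d m * x powi m)) summable_on UNIV \<and> ((\<lambda>m. d m * x powi m) has_sum 0) UNIV"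
      using hs0 by blast
  qed simp
  then show ?thesis by (simp add: d_def F_def)
qed

lemma rational_R: "rational_fn (Rf P N z)"
  unfolding rational_fn_def
proof (intro exI conjI allI impI)
  show "[:0,1:] ^ N * [:-z,1:] ^ N \<noteq> (0 :: complex poly)" by simp
  fix x assume "poly ([:0,1:] ^ N * [:-z,1:] ^ N) x \<noteq> 0"
  show "Rf P N z x = poly P x / poly ([:0,1:] ^ N * [:-z,1:] ^ N) x"
    by (simp add: Rf_def poly_power uminus_add_conv_diff)
qed

lemma not_bounded_outside: "\<not> bounded {x::complex. norm x > K}"
proof
  assume "bounded {x::complex. norm x > K}"
  then obtain B where B: "\<And>x::complex. norm x > K \<Longrightarrow> norm x \<le> B" unfolding bounded_iff by auto
  define t where "t = max (max B K) 0 + 1"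
  have "norm (complex_of_real t) = t" by (simp add: t_def)
  moreover have "t > K" "t > B" by (auto simp: t_def)
  ultimately show False using B[of "complex_of_real t"] by auto
qed

lemma fval_main:
  assumes z: "z \<noteq> 0"
  and Hc: "\<And>x. norm x > norm z \<Longrightarrow> (\<lambda>m. norm (c m * x powi m)) summable_on UNIV \<and> ((\<lambda>m. c m * x powi m) has_sum Rf P N z x) UNIV"
  and fdef: "f = (SOME f. rational_fn f \<and> iota_inf f = c)"
  shows "c = (\<lambda>m. fls_nth (Fr P N fls_X_inv z) (-m))"
    "laurent_expansion f 0 = Fr P N fls_X z"
    "laurent_expansion (\<lambda>x. f (x + z)) 0 = Fr P N (fls_X + fls_const z) z"
proof -
  define R where "R = Rf P N z"
  define Finf where "Finf = Fr P N fls_X_inv z"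
  have cF: "c = (\<lambda>m. fls_nth Finf (-m))"
    unfolding Finf_def by (rule ext) (rule coeff_eq[OF z Hc])
  then show "c = (\<lambda>m. fls_nth (Fr P N fls_X_inv z) (-m))" by (simp add: Finf_def)
  have RFinf: "(\<lambda>y. R (inverse y)) has_laurent_expansion Finf" unfolding R_def Finf_def by (rule Rinf)
  have iotaR: "iota_inf R = c"
    unfolding iota_inf_def cF laurent_expansion_0_eqI[OF RFinf] ..
  have "rational_fn R \<and> iota_inf R = c" using iotaR rational_R by (simp add: R_def)
  then have fprop: "rational_fn f \<and> iota_inf f = c" unfolding fdef
    by (rule someI[of "\<lambda>f. rational_fn f \<and> iota_inf f = c"])
  then obtain p q where q: "q \<noteq> 0" "\<And>x. poly q x \<noteq> 0 \<Longrightarrow> f x = poly p x / poly q x"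
    unfolding rational_fn_def by blast
  define g where "g = (\<lambda>x. poly p x / poly q x)"
  define G where "G = polyF p fls_X_inv / polyF q fls_X_inv"
  have gG: "(\<lambda>y. g (inverse y)) has_laurent_expansion G"
    unfolding g_def G_def by (intro laurent_expansion_intros polyF_laurent has_laurent_expansion_fls_X_inv)
  define Zq where "Zq = {x. poly q x = 0}"
  have finZq: "finite Zq" unfolding Zq_def using q(1) by (rule poly_roots_finite)
  have evf: "eventually (\<lambda>y. f (inverse y) = g (inverse y)) (at 0)"
  proof -
    have "eventually (\<lambda>y. y \<notin> inverse ` Zq) (at (0::complex))"
      by (rule eventually_avoid_finite) (use finZq in simp)
    then show ?thesis
    proof eventually_elim
      case (elim y)
      have "poly q (inverse y) \<noteq> 0"
      proof
        assume "poly q (inverse y) = 0"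
        then have "inverse (inverse y) \<in> inverse ` Zq" unfolding Zq_def by blast
        then show False using elim by simp
      qed
      then show ?case using q(2) by (simp add: g_def)
    qed
  qed
  have fG: "(\<lambda>y. f (inverse y)) has_laurent_expansion G"
    using gG has_laurent_expansion_cong[OF evf refl] by simp
  have "iota_inf f = (\<lambda>m. fls_nth G (-m))"
    unfolding iota_inf_def laurent_expansion_0_eqI[OF fG] ..
  then have "(\<lambda>m. fls_nth G (-m)) = (\<lambda>m. fls_nth Finf (-m))" using fprop cF by simp
  then have "fls_nth G (-(-n)) = fls_nth Finf (-(-n))" for n by metis
  then have GF: "G = Finf" by (intro fls_eqI) simp
  have evgR: "eventually (\<lambda>y. g (inverse y) = R (inverse y)) (at 0)"
  proof -
    have "eventually (\<lambda>y. eval_fls Finf y = g (inverse y)) (at 0)"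
      using gG unfolding GF has_laurent_expansion_def by blast
    moreover have "eventually (\<lambda>y. eval_fls Finf y = R (inverse y)) (at 0)"
      using RFinf unfolding has_laurent_expansion_def by blast
    ultimately show ?thesis by eventually_elim simp
  qed
  then obtain \<delta> where \<delta>: "\<delta> > 0" "\<And>y. y \<noteq> 0 \<Longrightarrow> dist y 0 < \<delta> \<Longrightarrow> g (inverse y) = R (inverse y)"
    unfolding eventually_at by blast
  define Q where "Q = [:0,1:] ^ N * [:-z,1:] ^ N"
  have polyQ: "poly Q x = x ^ N * (x - z) ^ N" for x
    by (simp add: Q_def poly_power uminus_add_conv_diff)
  define D where "D = p * Q - P * q"
  have D0: "D = 0"
  proof (rule ccontr)
    assume "D \<noteq> 0"
    then have finD: "finite {x. poly D x = 0}" by (rule poly_roots_finite)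
    define K where "K = 1 / \<delta> + norm z + 1"
    define T where "T = {x::complex. norm x > K} - Zq"
    have "infinite {x::complex. norm x > K}" using not_bounded_outside finite_imp_bounded by blast
    then have infT: "infinite T" unfolding T_def using finZq by (rule Diff_infinite_finite[rotated])
    have "T \<subseteq> {x. poly D x = 0}"
    proof
      fix x assume "x \<in> T"
      then have xK: "norm x > K" and qx: "poly q x \<noteq> 0" by (auto simp: T_def Zq_def)
      have d0: "1 / \<delta> > 0" using \<delta>(1) by simp
      have nz0: "norm z \<ge> 0" by simp
      have "norm x > 1 / \<delta>" "norm x > norm z" using xK d0 nz0 unfolding K_def by linarith+
      then have x0: "x \<noteq> 0" and xz: "x \<noteq> z" by auto
      have "inverse (norm x) < inverse (1 / \<delta>)"
        using \<open>norm x > 1 / \<delta>\<close> \<delta>(1) by (intro less_imp_inverse_less) auto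
      then have "dist (inverse x) 0 < \<delta>" by (simp add: norm_inverse)
      then have "g x = R x" using \<delta>(2)[of "inverse x"] x0 by simp
      then have "poly p x / poly q x = poly P x / poly Q x"
        unfolding g_def R_def Rf_def polyQ .
      moreover have "poly Q x \<noteq> 0" using x0 xz by (simp add: polyQ)
      ultimately have "poly p x * poly Q x = poly P x * poly q x"
        using qx by (simp add: frac_eq_eq)
      then show "x \<in> {x. poly D x = 0}" by (simp add: D_def)
    qed
    then have "finite T" using finD finite_subset by blast
    then show False using infT by simp
  qed
  define S where "S = Zq \<union> {0, z}"
  have finS: "finite S" using finZq by (simp add: S_def)
  have fR: "f x = R x" if "x \<notin> S" for x
  proof -
    have qx: "poly q x \<noteq> 0" and x0: "x \<noteq> 0" and xz: "x \<noteq> z" using that by (auto simp: S_def Zq_def)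
    have Qx: "poly Q x \<noteq> 0" using x0 xz by (simp add: polyQ)
    have "poly p x * poly Q x = poly P x * poly q x"
    proof -
      have "p * Q = P * q" using D0 by (simp add: D_def)
      then have "poly (p * Q) x = poly (P * q) x" by simp
      then show ?thesis by (simp only: poly_mult)
    qed
    then have "poly p x / poly q x = poly P x / poly Q x" using qx Qx by (simp add: frac_eq_eq)
    then show ?thesis using q(2)[OF qx] by (simp add: R_def Rf_def polyQ)
  qed
  have "eventually (\<lambda>x. f x = R x) (at 0)"
    using eventually_avoid_finite[OF finS] by eventually_elim (use fR in blast)
  then have "laurent_expansion f 0 = laurent_expansion R 0" by (rule laurent_expansion_cong) simp
  also have "\<dots> = Fr P N fls_X z" unfolding R_def using R0 by (intro laurent_expansion_0_eqI) simp
  finally show "laurent_expansion f 0 = Fr P N fls_X z" .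
  have "eventually (\<lambda>x. x \<notin> (\<lambda>s. s - z) ` S) (at (0::complex))"
    by (rule eventually_avoid_finite) (use finS in simp)
  then have "eventually (\<lambda>x. f (x + z) = R (x + z)) (at 0)"
  proof eventually_elim
    case (elim x)
    then have "x + z \<notin> S" by (metis add_diff_cancel_right' image_eqI)
    then show ?case by (rule fR)
  qed
  then have "laurent_expansion (\<lambda>x. f (x + z)) 0 = laurent_expansion (\<lambda>x. R (x + z)) 0"
    by (rule laurent_expansion_cong) simp
  also have "\<dots> = Fr P N (fls_X + fls_const z) z" unfolding R_def by (intro laurent_expansion_0_eqI Rz)
  finally show "laurent_expansion (\<lambda>x. f (x + z)) 0 = Fr P N (fls_X + fls_const z) z" .
qed

theorem proposition3p22:
  fixes smV :: "complex \<Rightarrow> 'v::ab_group_add \<Rightarrow> 'v"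
    and Y :: "'v \<Rightarrow> int \<Rightarrow> 'v \<Rightarrow> 'v"
    and vac om :: 'v
    and smW :: "complex \<Rightarrow> 'w::ab_group_add \<Rightarrow> 'w"
    and YW :: "'v \<Rightarrow> int \<Rightarrow> 'w \<Rightarrow> 'w"
    and z :: complex and v :: 'v and \<alpha> :: "'w \<Rightarrow> complex"
  assumes "is_VOA smV Y vac om"
    and "is_weak_module Y vac smW YW smV"
    and "z \<noteq> 0"
    and "\<alpha> \<in> D_Pz smV Y om smW YW z"
  shows "\<forall>p a.
     fprod2 (\<lambda>i j. fsum (\<lambda>b. delta_coeff i j b * z powi b))
            (\<lambda>i j. if i = 0 then Ystar smV Y om smW YW v \<alpha> j else (\<lambda>_. 0)) p a
   - fprod2 (\<lambda>i j. fsum (\<lambda>b. delta_coeff_neg i j b * z powi b))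
            (\<lambda>i j. if i = 0 then YR smV Y om smW YW v \<alpha> j else (\<lambda>_. 0)) p a
   = fprod2 (\<lambda>i j. fsum (\<lambda>s. delta_coeff s j i * z powi s))
            (\<lambda>i j. if j = 0 then YL smV Y om smW YW z v \<alpha> i else (\<lambda>_. 0)) p a"
proof -
  have z: "z \<noteq> 0" by (rule assms(3))
  obtain N :: nat where HN: "\<And>w. \<exists>P::complex poly. \<forall>x. cmod x > cmod z \<longrightarrow>
        (\<lambda>m. cmod (\<alpha> (Yopp smV Y om smW YW v m w) * x powi m)) summable_on UNIV
      \<and> ((\<lambda>m. \<alpha> (Yopp smV Y om smW YW v m w) * x powi m)
            has_sum (poly P x / (x ^ N * (x - z) ^ N))) UNIV"
    using assms(4) unfolding D_Pz_def by blast
  show ?thesis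
  proof (intro allI ext)
    fix p a :: int and w :: 'w
    obtain P where HP: "\<forall>x. cmod x > cmod z \<longrightarrow>
        (\<lambda>m. cmod (\<alpha> (Yopp smV Y om smW YW v m w) * x powi m)) summable_on UNIV
      \<and> ((\<lambda>m. \<alpha> (Yopp smV Y om smW YW v m w) * x powi m)
            has_sum (poly P x / (x ^ N * (x - z) ^ N))) UNIV"
      using HN by blast
    define c where "c = (\<lambda>m. \<alpha> (Yopp smV Y om smW YW v m w))"
    define f where "f = f_val smV Y om smW YW v \<alpha> w"
    have Hc: "(\<lambda>m. norm (c m * x powi m)) summable_on UNIV \<and> ((\<lambda>m. c m * x powi m) has_sum Rf P N z x) UNIV"
      if "norm x > norm z" for x
      using HP that by (simp add: c_def Rf_def)
    have fdef: "f = (SOME f. rational_fn f \<and> iota_inf f = c)"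
      by (simp add: f_def f_val_def c_def)
    define Finf where "Finf = Fr P N fls_X_inv z"
    define F0 where "F0 = Fr P N fls_X z"
    define Fz where "Fz = Fr P N (fls_X + fls_const z) z"
    have cF: "c = (\<lambda>m. fls_nth Finf (-m))" using fval_main(1)[OF z Hc fdef] by (simp add: Finf_def)
    have fF0: "laurent_expansion f 0 = F0" using fval_main(2)[OF z Hc fdef] by (simp add: F0_def)
    have fFz: "laurent_expansion (\<lambda>x. f (x + z)) 0 = Fz" using fval_main(3)[OF z Hc fdef] by (simp add: Fz_def)
    have L1: "fprod2 (\<lambda>i j. fsum (\<lambda>b. delta_coeff i j b * z powi b))
            (\<lambda>i j. if i = 0 then Ystar smV Y om smW YW v \<alpha> j else (\<lambda>_. 0)) p a w
          = fls_nth (Hf z p * Finf) (-a)"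
    proof -
      have "fprod2 (\<lambda>i j. fsum (\<lambda>b. delta_coeff i j b * z powi b))
            (\<lambda>i j. if i = 0 then Ystar smV Y om smW YW v \<alpha> j else (\<lambda>_. 0)) p a w
          = fsum (\<lambda>(i,j). if i = p then E1 z p j * fls_nth Finf (j - a) else 0)"
      proof -
        have cj: "\<alpha> (Yopp smV Y om smW YW v (a - j) w) = fls_nth Finf (j - a)" for j
        proof -
          have "c (a - j) = fls_nth Finf (-(a - j))" by (simp add: cF)
          then show ?thesis by (simp add: c_def)
        qed
        show ?thesis unfolding fprod2_def
          by (rule arg_cong[where f=fsum]) (auto simp: fun_eq_iff E1_def Ystar_def cj)
      qed
      also have "\<dots> = fsum (\<lambda>j. E1 z p j * fls_nth Finf (j - a))" by (rule fsum_pair1)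
      also have "\<dots> = fsum (\<lambda>k. E1 z p (-k) * fls_nth Finf (-k - a))"
        using fsum_bij[of uminus "\<lambda>j. E1 z p j * fls_nth Finf (j - a)"] by (simp add: bij_uminus)
      also have "\<dots> = fls_nth (Hf z p * Finf) (-a)"
        unfolding fls_times_fsum C1 by (simp only: diff_conv_add_uminus add.commute)
      finally show ?thesis .
    qed
    have L2: "fprod2 (\<lambda>i j. fsum (\<lambda>b. delta_coeff_neg i j b * z powi b))
            (\<lambda>i j. if i = 0 then YR smV Y om smW YW v \<alpha> j else (\<lambda>_. 0)) p a w
          = fls_nth (Kf z p * F0) a"
    proof -
      have "fprod2 (\<lambda>i j. fsum (\<lambda>b. delta_coeff_neg i j b * z powi b))
            (\<lambda>i j. if i = 0 then YR smV Y om smW YW v \<alpha> j else (\<lambda>_. 0)) p a w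
          = fsum (\<lambda>(i,j). if i = p then E2 z p j * fls_nth F0 (a - j) else 0)"
        unfolding fprod2_def
        by (rule arg_cong[where f=fsum]) (auto simp: fun_eq_iff E2_def YR_def iota0_def f_def[symmetric] fF0)
      also have "\<dots> = fsum (\<lambda>j. E2 z p j * fls_nth F0 (a - j))" by (rule fsum_pair1)
      also have "\<dots> = fls_nth (Kf z p * F0) a"
        unfolding fls_times_fsum C2[OF z] ..
      finally show ?thesis .
    qed
    have L3: "fprod2 (\<lambda>i j. fsum (\<lambda>s. delta_coeff s j i * z powi s))
            (\<lambda>i j. if j = 0 then YL smV Y om smW YW z v \<alpha> i else (\<lambda>_. 0)) p a w
          = fls_nth (Mf z a * Fz) p"
    proof -
      have "fprod2 (\<lambda>i j. fsum (\<lambda>s. delta_coeff s j i * z powi s))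
            (\<lambda>i j. if j = 0 then YL smV Y om smW YW z v \<alpha> i else (\<lambda>_. 0)) p a w
          = fsum (\<lambda>(i,j). if j = a then E3 z i a * fls_nth Fz (p - i) else 0)"
        unfolding fprod2_def
        by (rule arg_cong[where f=fsum]) (auto simp: fun_eq_iff E3_def YL_def iota0_def f_def[symmetric] fFz)
      also have "\<dots> = fsum (\<lambda>i. E3 z i a * fls_nth Fz (p - i))" by (rule fsum_pair2)
      also have "\<dots> = fls_nth (Mf z a * Fz) p"
        unfolding fls_times_fsum C3[OF z] ..
      finally show ?thesis .
    qed
    have "Dd z Finf F0 Fz p a = 0" unfolding Finf_def F0_def Fz_def by (rule Dd_rat[OF z])
    then show "(fprod2 (\<lambda>i j. fsum (\<lambda>b. delta_coeff i j b * z powi b))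
            (\<lambda>i j. if i = 0 then Ystar smV Y om smW YW v \<alpha> j else (\<lambda>_. 0)) p a
          - fprod2 (\<lambda>i j. fsum (\<lambda>b. delta_coeff_neg i j b * z powi b))
            (\<lambda>i j. if i = 0 then YR smV Y om smW YW v \<alpha> j else (\<lambda>_. 0)) p a) w
          = fprod2 (\<lambda>i j. fsum (\<lambda>s. delta_coeff s j i * z powi s))
            (\<lambda>i j. if j = 0 then YL smV Y om smW YW z v \<alpha> i else (\<lambda>_. 0)) p a w"
      unfolding minus_apply L1 L2 L3 Dd_def by (simp add: algebra_simps)
  qed
qed

end
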